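(* Let $\phi$ be an instance of \textsc{Max (2,3)-SAT} with $n$ variables and let $T_\phi$ be the tournament instance constructed from $\phi$ as described in the context. Let $\mathsf{opt}_A(\phi)$ be the maximum number of clauses of $\phi$ satisfied by an assignment and $\mathsf{opt}_B(T_\phi)$ the maximum tournament value of $T_\phi$ over all seedings. Then $\mathsf{opt}_B(T_\phi)=\mathsf{opt}_A(\phi)+n$.
   Context: Tournament model: players form a finite set of size $2^{n'}$ totally ordered by strength (stronger beats weaker). A seeding is a bijection $\sigma$ from players to $[2^{n'}]$. In round $r=1,\dots,n'$, for each block of seed positions $\{(k-1)2^r+1,\dots,k2^r\}$, the winner $a$ of its first half $\{(k-1)2^r+1,\dots,(k-1)2^r+2^{r-1}\}$ plays the winner $b$ of its second half (a single-position block is won by the player seeded there), the stronger one wins the block, and the game has value $v(a,b)$ (values do not depend on the round). The tournament value is the sum of values of all games played. \textsc{Max (2,3)-SAT} instance: a CNF formula $\phi$ with variables $x_1,\dots,x_n$ and clauses $c_1,\dots,c_m$, each clause having exactly two literals and each variable appearing in at most three clauses. Construction of $T_\phi$: let $n'$ be the smallest integer with $16n\le 2^{n'}$ and $p=2^{n'}-16n$. Players: for each $i\in[n]$, variable players $x_i,x_i^T,x_i^F$ and special players $\widehat d_i,d_i,\widetilde d_i$; for each clause $c$, a clause player $c$; dummy players $f_1,\dots,f_{10n+p-m}$. Strength order (strongest first): $\widehat d_1>d_1>\widetilde d_1>\widehat d_2>d_2>\widetilde d_2>\dots>\widehat d_n>d_n>\widetilde d_n>x_1>x_1^T>x_1^F>\dots>x_n>x_n^T>x_n^F>c_1>\dots>c_m>f_1>\dots>f_{10n+p-m}$.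 Round-oblivious symmetric game values ($v(a,b)=v(b,a)$): for each $i$, $v(x_i,x_i^T)=v(x_i,x_i^F)=1$; for each clause $c$ containing a literal of variable $x$, $v(c,x^T)=1$ if $x$ appears non-negated in $c$ and $v(c,x^F)=1$ if it appears negated; for each $i$, $v(d_i,\widehat d_i)=v(d_i,\widetilde d_i)=v(d_i,x_i)=0$; for each $i$ and every player $Y$ for which the pair value has not been set above, $v(d_i,Y)=v(x_i,Y)=-5$; all remaining pairs have value $0$. Thus the values lie in $\{0,1,-5\}$. *)

theory Defs
  imports Main
begin

text \<open>Strength is encoded by a rank function: smaller rank = stronger player.  The block of round r with index k (k >= 1) consists of
  the positions (k-1)2^r+1 .. k 2^r; round 0 blocks are single positions.\<close>

definition stronger_of :: "('a \<Rightarrow> nat) \<Rightarrow> 'a \<Rightarrow> 'a \<Rightarrow> 'a" where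
  "stronger_of rk a b = (if rk a \<le> rk b then a else b)"

text \<open>s maps a seed position to the player seeded there.\<close>
fun block_winner :: "('a \<Rightarrow> nat) \<Rightarrow> (nat \<Rightarrow> 'a) \<Rightarrow> nat \<Rightarrow> nat \<Rightarrow> 'a" where
  "block_winner rk s 0 k = s k"
| "block_winner rk s (Suc r) k =
     stronger_of rk (block_winner rk s r (2 * k - 1)) (block_winner rk s r (2 * k))"

definition tournament_value ::
  "('a \<Rightarrow> nat) \<Rightarrow> ('a \<Rightarrow> 'a \<Rightarrow> int) \<Rightarrow> nat \<Rightarrow> 'a set \<Rightarrow> ('a \<Rightarrow> nat) \<Rightarrow> int" where
  "tournament_value rk v N P \<sigma> =
     (let s = the_inv_into P \<sigma> in
      (\<Sum>r\<in>{1..N}. \<Sum>k\<in>{1..2^(N - r)}.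
          v (block_winner rk s (r - 1) (2 * k - 1)) (block_winner rk s (r - 1) (2 * k))))"

definition is_seeding :: "'a set \<Rightarrow> nat \<Rightarrow> ('a \<Rightarrow> nat) \<Rightarrow> bool" where
  "is_seeding P N \<sigma> \<longleftrightarrow> bij_betw \<sigma> P {1..2^N}"

definition opt_tournament ::
  "('a \<Rightarrow> nat) \<Rightarrow> ('a \<Rightarrow> 'a \<Rightarrow> int) \<Rightarrow> nat \<Rightarrow> 'a set \<Rightarrow> int" where
  "opt_tournament rk v N P = Max {tournament_value rk v N P \<sigma> | \<sigma>. is_seeding P N \<sigma>}"

text \<open>Variables are 0..n-1. A literal is (variable, polarity), polarity True = non-negated.
  A clause is a pair of two distinct literals; a formula is a list of clauses c_0..c_(m-1).\<close>

type_synonym literal = "nat \<times> bool"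
type_synonym clause = "literal \<times> literal"

definition lit_sat :: "(nat \<Rightarrow> bool) \<Rightarrow> literal \<Rightarrow> bool" where
  "lit_sat a l \<longleftrightarrow> a (fst l) = snd l"

definition clause_sat :: "(nat \<Rightarrow> bool) \<Rightarrow> clause \<Rightarrow> bool" where
  "clause_sat a c \<longleftrightarrow> lit_sat a (fst c) \<or> lit_sat a (snd c)"

definition clause_vars :: "clause \<Rightarrow> nat set" where
  "clause_vars c = {fst (fst c), fst (snd c)}"

definition max23sat_instance :: "nat \<Rightarrow> clause list \<Rightarrow> bool" where
  "max23sat_instance n cs \<longleftrightarrow>
     (\<forall>c\<in>set cs. fst c \<noteq> snd c \<and> clause_vars c \<subseteq> {..<n}) \<and>
     (\<forall>i<n. card {j. j < length cs \<and> i \<in> clause_vars (cs ! j)} \<le> 3)"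

definition num_sat :: "clause list \<Rightarrow> (nat \<Rightarrow> bool) \<Rightarrow> nat" where
  "num_sat cs a = card {j. j < length cs \<and> clause_sat a (cs ! j)}"

definition opt_sat :: "clause list \<Rightarrow> nat" where
  "opt_sat cs = Max {num_sat cs a | a. True}"

text \<open>DH i = \<open>\<widehat>d_i\<close>, D i = d_i, DT i = \<open>\<widetilde>d_i\<close>, X i = x_i, XT i = x_i^T, XF i = x_i^F,
  C j = clause player c_j, F k = dummy f_k (all 0-based).\<close>
datatype player = DH nat | D nat | DT nat | X nat | XT nat | XF nat | C nat | F nat

definition tN :: "nat \<Rightarrow> nat" where
  "tN n = (LEAST N. 16 * n \<le> 2 ^ N)"

definition tp :: "nat \<Rightarrow> nat" where
  "tp n = 2 ^ tN n - 16 * n"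

definition players :: "nat \<Rightarrow> clause list \<Rightarrow> player set" where
  "players n cs =
     (\<Union>i\<in>{..<n}. {DH i, D i, DT i, X i, XT i, XF i}) \<union>
     C ` {..<length cs} \<union> F ` {..<10 * n + tp n - length cs}"

fun prank :: "nat \<Rightarrow> nat \<Rightarrow> player \<Rightarrow> nat" where
  "prank n m (DH i) = 3 * i"
| "prank n m (D i) = 3 * i + 1"
| "prank n m (DT i) = 3 * i + 2"
| "prank n m (X i) = 3 * n + 3 * i"
| "prank n m (XT i) = 3 * n + 3 * i + 1"
| "prank n m (XF i) = 3 * n + 3 * i + 2"
| "prank n m (C j) = 6 * n + j"
| "prank n m (F k) = 6 * n + m + k"

definition pos_in :: "nat \<Rightarrow> clause \<Rightarrow> bool" where
  "pos_in i c \<longleftrightarrow> fst c = (i, True) \<or> snd c = (i, True)"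

definition neg_in :: "nat \<Rightarrow> clause \<Rightarrow> bool" where
  "neg_in i c \<longleftrightarrow> fst c = (i, False) \<or> snd c = (i, False)"

text \<open>Values explicitly set in the construction (for the ordered pair, before symmetrisation).\<close>
fun set_val :: "clause list \<Rightarrow> player \<Rightarrow> player \<Rightarrow> int option" where
  "set_val cs (X i) (XT j) = (if i = j then Some 1 else None)"
| "set_val cs (X i) (XF j) = (if i = j then Some 1 else None)"
| "set_val cs (C j) (XT i) = (if j < length cs \<and> pos_in i (cs ! j) then Some 1 else None)"
| "set_val cs (C j) (XF i) = (if j < length cs \<and> neg_in i (cs ! j) then Some 1 else None)"
| "set_val cs (D i) (DH j) = (if i = j then Some 0 else None)"
| "set_val cs (D i) (DT j) = (if i = j then Some 0 else None)"
| "set_val cs (D i) (X j) = (if i = j then Some 0 else None)"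
| "set_val cs a b = None"

fun is_dx :: "player \<Rightarrow> bool" where
  "is_dx (D i) = True"
| "is_dx (X i) = True"
| "is_dx _ = False"

definition gval :: "clause list \<Rightarrow> player \<Rightarrow> player \<Rightarrow> int" where
  "gval cs a b =
     (case set_val cs a b of Some v \<Rightarrow> v
      | None \<Rightarrow> (case set_val cs b a of Some v \<Rightarrow> v
                | None \<Rightarrow> (if is_dx a \<or> is_dx b then -5 else 0)))"

definition opt_T :: "nat \<Rightarrow> clause list \<Rightarrow> int" where
  "opt_T n cs = opt_tournament (prank n (length cs)) (gval cs) (tN n) (players n cs)"

end

theory Submission
  imports Defs
begin

lemma div_pow_Suc: "(x::nat) div 2^(Suc r) = (x div 2^r) div 2"
  by (subst power_Suc2) (rule div_mult2_eq)

lemma half_up: "(d::nat) = 2*k-2 \<or> d = 2*k-1 \<Longrightarrow> 1 \<le> k \<Longrightarrow> d div 2 = k-1"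
  by presburger

lemma half_down: "(d::nat) div 2 = k-1 \<Longrightarrow> 1 \<le> k \<Longrightarrow> d = 2*k-2 \<or> d = 2*k-1"
  by presburger

lemma blk_up: "(x::nat) div 2^r = 2*k-2 \<or> x div 2^r = 2*k-1 \<Longrightarrow> 1 \<le> k \<Longrightarrow> x div 2^(Suc r) = k-1"
  unfolding div_pow_Suc by (rule half_up)

lemma blk_down: "(x::nat) div 2^(Suc r) = k-1 \<Longrightarrow> 1 \<le> k \<Longrightarrow> x div 2^r = 2*k-2 \<or> x div 2^r = 2*k-1"
  unfolding div_pow_Suc by (rule half_down)

lemma div_pow_mono: "r' \<le> r \<Longrightarrow> (a::nat) div 2^r' = b div 2^r' \<Longrightarrow> a div 2^r = b div 2^r"
proof (induction r)
  case 0 then show ?case by simp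
next
  case (Suc r)
  show ?case
  proof (cases "r' = Suc r")
    case True then show ?thesis using Suc by simp
  next
    case False then have "r' \<le> r" using Suc by simp
    then have "a div 2^r = b div 2^r" using Suc by blast
    then show ?thesis by (simp only: div_pow_Suc)
  qed
qed

locale ko =
  fixes P :: "'a set" and N :: nat and \<sigma> :: "'a \<Rightarrow> nat" and rk :: "'a \<Rightarrow> nat"
  assumes bij: "bij_betw \<sigma> P {1..2^N}" and rkinj: "inj_on rk P"
begin

definition s where "s = the_inv_into P \<sigma>"

definition win where
  "win y r \<longleftrightarrow> (\<forall>y'\<in>P. (\<sigma> y' - 1) div 2^r = (\<sigma> y - 1) div 2^r \<longrightarrow> rk y \<le> rk y')"

definition G where "G = Sigma {1..N} (\<lambda>r. {1..(2::nat)^(N-r)})"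

definition Wn where "Wn r k = block_winner rk s r k"

definition Ls where "Ls r k = (if block_winner rk s r k = block_winner rk s (r-1) (2*k-1)
   then block_winner rk s (r-1) (2*k) else block_winner rk s (r-1) (2*k-1))"

lemma s_in: "q \<in> {1..2^N} \<Longrightarrow> s q \<in> P \<and> \<sigma> (s q) = q"
proof
  assume q: "q \<in> {1..2^N}"
  show "s q \<in> P" using bij q unfolding s_def bij_betw_def by (metis the_inv_into_into order_refl)
  show "\<sigma> (s q) = q" using bij q unfolding s_def by (meson f_the_inv_into_f_bij_betw)
qed

lemma s_sigma: "y \<in> P \<Longrightarrow> s (\<sigma> y) = y"
  using bij unfolding s_def by (simp add: bij_betw_def the_inv_into_f_f)

lemma sigma_in: "y \<in> P \<Longrightarrow> \<sigma> y \<in> {1..2^N}"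
  using bij by (auto simp: bij_betw_def)

lemma sigma_inj: "y \<in> P \<Longrightarrow> y' \<in> P \<Longrightarrow> \<sigma> y = \<sigma> y' \<Longrightarrow> y = y'"
  using bij by (auto simp: bij_betw_def inj_on_def)

lemma rk_inj: "y \<in> P \<Longrightarrow> y' \<in> P \<Longrightarrow> rk y = rk y' \<Longrightarrow> y = y'"
  using rkinj by (auto simp: inj_on_def)

lemma win_mono: "r' \<le> r \<Longrightarrow> win y r \<Longrightarrow> win y r'"
  unfolding win_def using div_pow_mono by blast

lemma win0: "y \<in> P \<Longrightarrow> win y 0"
  unfolding win_def using sigma_in sigma_inj
  by (metis atLeastAtMost_iff div_by_1 le_add_diff_inverse2 le_refl power_0)

lemma bw_char:
  "r \<le> N \<Longrightarrow> 1 \<le> k \<Longrightarrow> k \<le> 2^(N-r) \<Longrightarrow>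
   block_winner rk s r k \<in> P \<and> (\<sigma> (block_winner rk s r k) - 1) div 2^r = k - 1 \<and> win (block_winner rk s r k) r"
proof (induction r arbitrary: k)
  case 0
  then have "k \<in> {1..2^N}" by simp
  then show ?case using s_in win0 by auto
next
  case (Suc r)
  have rN: "r \<le> N" "r < N" using Suc by auto
  have pw: "(2::nat)^(N-r) = 2 * 2^(N - Suc r)" using rN
    by (metis Suc_diff_Suc power_Suc)
  define A where "A = block_winner rk s r (2*k-1)"
  define B where "B = block_winner rk s r (2*k)"
  have hA: "A \<in> P \<and> (\<sigma> A - 1) div 2^r = 2*k-2 \<and> win A r"
    using Suc.IH[of "2*k-1"] Suc.prems pw rN unfolding A_def by auto
  have hB: "B \<in> P \<and> (\<sigma> B - 1) div 2^r = 2*k-1 \<and> win B r"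
    using Suc.IH[of "2*k"] Suc.prems pw rN unfolding B_def by auto
  have eq: "block_winner rk s (Suc r) k = stronger_of rk A B" unfolding A_def B_def by simp
  have dA: "(\<sigma> A - 1) div 2^Suc r = k - 1" using hA Suc.prems by (intro blk_up) auto
  have dB: "(\<sigma> B - 1) div 2^Suc r = k - 1" using hB Suc.prems by (intro blk_up) auto
  have blk: "\<And>y'. y' \<in> P \<Longrightarrow> (\<sigma> y' - 1) div 2^Suc r = k - 1 \<Longrightarrow>
      (\<sigma> y' - 1) div 2^r = 2*k-2 \<or> (\<sigma> y' - 1) div 2^r = 2*k-1"
    using blk_down Suc.prems by simp
  have wA: "rk A \<le> rk B \<Longrightarrow> win A (Suc r)"
    unfolding win_def
  proof (intro ballI impI)
    fix y' assume "rk A \<le> rk B" "y' \<in> P" "(\<sigma> y' - 1) div 2 ^ Suc r = (\<sigma> A - 1) div 2 ^ Suc r"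
    then have c: "(\<sigma> y' - 1) div 2^r = (\<sigma> A - 1) div 2^r \<or> (\<sigma> y' - 1) div 2^r = (\<sigma> B - 1) div 2^r"
    proof -
      have e: "(\<sigma> y' - 1) div 2^Suc r = k - 1" using \<open>(\<sigma> y' - 1) div 2 ^ Suc r = (\<sigma> A - 1) div 2 ^ Suc r\<close> dA by simp
      have "(\<sigma> y' - 1) div 2^r = 2*k-2 \<or> (\<sigma> y' - 1) div 2^r = 2*k-1" using blk[OF \<open>y' \<in> P\<close> e] .
      moreover have "(\<sigma> A - 1) div 2^r = 2*k-2" using hA by blast
      moreover have "(\<sigma> B - 1) div 2^r = 2*k-1" using hB by blast
      ultimately show ?thesis by argo
    qed
    have "win A r" "win B r" using hA hB by auto
    then show "rk A \<le> rk y'" using c \<open>rk A \<le> rk B\<close> \<open>y' \<in> P\<close> unfolding win_def by fastforce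
  qed
  have wB: "\<not> rk A \<le> rk B \<Longrightarrow> win B (Suc r)"
    unfolding win_def
  proof (intro ballI impI)
    fix y' assume "\<not> rk A \<le> rk B" "y' \<in> P" "(\<sigma> y' - 1) div 2 ^ Suc r = (\<sigma> B - 1) div 2 ^ Suc r"
    then have c: "(\<sigma> y' - 1) div 2^r = (\<sigma> A - 1) div 2^r \<or> (\<sigma> y' - 1) div 2^r = (\<sigma> B - 1) div 2^r"
    proof -
      have e: "(\<sigma> y' - 1) div 2^Suc r = k - 1" using \<open>(\<sigma> y' - 1) div 2 ^ Suc r = (\<sigma> B - 1) div 2 ^ Suc r\<close> dB by simp
      have "(\<sigma> y' - 1) div 2^r = 2*k-2 \<or> (\<sigma> y' - 1) div 2^r = 2*k-1" using blk[OF \<open>y' \<in> P\<close> e] .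
      moreover have "(\<sigma> A - 1) div 2^r = 2*k-2" using hA by blast
      moreover have "(\<sigma> B - 1) div 2^r = 2*k-1" using hB by blast
      ultimately show ?thesis by argo
    qed
    have "win A r" "win B r" using hA hB by auto
    then show "rk B \<le> rk y'" using c \<open>\<not> rk A \<le> rk B\<close> \<open>y' \<in> P\<close> unfolding win_def by fastforce
  qed
  show ?case
  proof (cases "rk A \<le> rk B")
    case True
    then have "block_winner rk s (Suc r) k = A" using eq by (simp add: stronger_of_def)
    then show ?thesis using wA True hA dA by simp
  next
    case False
    then have "block_winner rk s (Suc r) k = B" using eq by (simp add: stronger_of_def)
    then show ?thesis using wB False hB dB by simp
  qed
qed

lemma bw_unique:
  assumes "r \<le> N" "1 \<le> k" "k \<le> 2^(N-r)" "y \<in> P" "win y r" "(\<sigma> y - 1) div 2^r = k - 1"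
  shows "block_winner rk s r k = y"
proof -
  let ?b = "block_winner rk s r k"
  have b: "?b \<in> P" "(\<sigma> ?b - 1) div 2^r = k - 1" "win ?b r" using bw_char assms by auto
  have "rk ?b \<le> rk y" using b assms unfolding win_def by auto
  moreover have "rk y \<le> rk ?b" using b assms unfolding win_def by auto
  ultimately show ?thesis using rk_inj b assms by (meson le_antisym)
qed

lemma G_iff: "(r,k) \<in> G \<longleftrightarrow> 1 \<le> r \<and> r \<le> N \<and> 1 \<le> k \<and> k \<le> (2::nat)^(N-r)"
  unfolding G_def by auto

lemma finite_G: "finite G" unfolding G_def by auto

lemma game_facts:
  assumes "(r,k) \<in> G"
  shows "Wn r k \<in> P" "win (Wn r k) r" "(\<sigma> (Wn r k) - 1) div 2^r = k - 1"
    "Ls r k \<in> P" "win (Ls r k) (r-1)" "\<not> win (Ls r k) r" "(\<sigma> (Ls r k) - 1) div 2^r = k - 1"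
    "rk (Wn r k) < rk (Ls r k)"
    "{block_winner rk s (r-1) (2*k-1), block_winner rk s (r-1) (2*k)} = {Wn r k, Ls r k}"
proof -
  have r: "1 \<le> r" "r \<le> N" "1 \<le> k" "k \<le> 2^(N-r)" using assms G_iff by auto
  obtain r0 where r0: "r = Suc r0" using r by (cases r) auto
  have pw: "(2::nat)^(N-r0) = 2 * 2^(N - r)" using r r0
    by (metis Suc_diff_Suc Suc_le_lessD power_Suc)
  define A where "A = block_winner rk s r0 (2*k-1)"
  define B where "B = block_winner rk s r0 (2*k)"
  have hA: "A \<in> P \<and> (\<sigma> A - 1) div 2^r0 = 2*k-2 \<and> win A r0"
    using bw_char[of r0 "2*k-1"] r r0 pw unfolding A_def by auto
  have hB: "B \<in> P \<and> (\<sigma> B - 1) div 2^r0 = 2*k-1 \<and> win B r0"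
    using bw_char[of r0 "2*k"] r r0 pw unfolding B_def by auto
  have AB: "A \<noteq> B" using hA hB r by auto
  have W: "Wn r k = stronger_of rk A B" unfolding Wn_def A_def B_def r0 by simp
  have L: "Ls r k = (if Wn r k = A then B else A)" unfolding Ls_def Wn_def A_def B_def r0 by simp
  have wc: "Wn r k \<in> P" "win (Wn r k) r" "(\<sigma> (Wn r k) - 1) div 2^r = k - 1"
    using bw_char[of r k] r unfolding Wn_def by auto
  then show "Wn r k \<in> P" "win (Wn r k) r" "(\<sigma> (Wn r k) - 1) div 2^r = k - 1" by auto
  show "Ls r k \<in> P" using L hA hB by auto
  show "win (Ls r k) (r-1)" using L hA hB r0 by auto
  have "(\<sigma> (Ls r k) - 1) div 2^r0 = 2*k-2 \<or> (\<sigma> (Ls r k) - 1) div 2^r0 = 2*k-1"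
    using L hA hB by auto
  then show dL: "(\<sigma> (Ls r k) - 1) div 2^r = k - 1" using r unfolding r0 by (intro blk_up) auto
  have ne: "Ls r k \<noteq> Wn r k" using L W AB by (auto simp: stronger_of_def)
  show nw: "\<not> win (Ls r k) r"
  proof
    assume "win (Ls r k) r"
    then have "Wn r k = Ls r k" using bw_unique[of r k "Ls r k"] r dL \<open>Ls r k \<in> P\<close>
      unfolding Wn_def by auto
    then show False using ne by simp
  qed
  have "rk (Wn r k) \<le> rk (Ls r k)" using wc dL \<open>Ls r k \<in> P\<close> unfolding win_def by auto
  then show "rk (Wn r k) < rk (Ls r k)" using ne rk_inj wc \<open>Ls r k \<in> P\<close>
    by (metis le_neq_implies_less)
  show "{block_winner rk s (r-1) (2*k-1), block_winner rk s (r-1) (2*k)} = {Wn r k, Ls r k}"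
    using L W r0 unfolding A_def B_def by (auto simp: stronger_of_def)
qed

lemma Ls_unique:
  assumes "(r,k) \<in> G" "y \<in> P" "win y (r-1)" "\<not> win y r" "(\<sigma> y - 1) div 2^r = k - 1"
  shows "Ls r k = y"
proof -
  have r: "1 \<le> r" "r \<le> N" "1 \<le> k" "k \<le> 2^(N-r)" using assms G_iff by auto
  obtain r0 where r0: "r = Suc r0" using r by (cases r) auto
  have pw: "(2::nat)^(N-r0) = 2 * 2^(N - r)" using r r0
    by (metis Suc_diff_Suc Suc_le_lessD power_Suc)
  have d: "(\<sigma> y - 1) div 2^r0 = 2*k-2 \<or> (\<sigma> y - 1) div 2^r0 = 2*k-1"
    using assms(5) r0 r blk_down by simp
  have "block_winner rk s r0 (2*k-1) = y \<or> block_winner rk s r0 (2*k) = y"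
  proof (cases "(\<sigma> y - 1) div 2^r0 = 2*k-2")
    case True
    then show ?thesis using bw_unique[of r0 "2*k-1" y] r r0 pw assms by auto
  next
    case False
    then show ?thesis using d bw_unique[of r0 "2*k" y] r r0 pw assms by auto
  qed
  then have "y \<in> {Wn r k, Ls r k}" using game_facts(9)[OF assms(1)] r0 by auto
  moreover have "Wn r k \<noteq> y" using game_facts(2)[OF assms(1)] assms(4) by auto
  ultimately show ?thesis by auto
qed

lemma Ls_inj: "inj_on (\<lambda>(r,k). Ls r k) G"
proof (rule inj_onI, clarsimp)
  fix r1 k1 r2 k2 assume g1: "(r1,k1) \<in> G" and g2: "(r2,k2) \<in> G" and e: "Ls r1 k1 = Ls r2 k2"
  have "r1 = r2"
  proof (rule ccontr)
    assume "r1 \<noteq> r2"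
    then consider "r1 < r2" | "r2 < r1" by linarith
    then show False
    proof cases
      case 1
      then have "win (Ls r2 k2) r1" using game_facts(5)[OF g2] win_mono[of r1 "r2-1"] by auto
      then show False using game_facts(6)[OF g1] e by simp
    next
      case 2
      then have "win (Ls r1 k1) r2" using game_facts(5)[OF g1] win_mono[of r2 "r1-1"] by auto
      then show False using game_facts(6)[OF g2] e by simp
    qed
  qed
  moreover have "k1 - 1 = k2 - 1" using game_facts(7)[OF g1] game_facts(7)[OF g2] e \<open>r1 = r2\<close> by simp
  ultimately show "r1 = r2 \<and> k1 = k2" using g1 g2 G_iff by auto
qed

lemma W_before_L:
  assumes "(r1,k1) \<in> G" "(r2,k2) \<in> G" "Wn r2 k2 = Ls r1 k1"
  shows "r2 < r1"
proof (rule ccontr)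
  assume "\<not> r2 < r1"
  then have "win (Ls r1 k1) r1" using game_facts(2)[OF assms(2)] assms(3) win_mono[of r1 r2] by auto
  then show False using game_facts(6)[OF assms(1)] by simp
qed

lemma game_at:
  assumes "y \<in> P" "1 \<le> r" "r \<le> N"
  shows "(r, (\<sigma> y - 1) div 2^r + 1) \<in> G"
proof -
  have "\<sigma> y - 1 < 2^N" using sigma_in[OF assms(1)] by auto
  also have "(2::nat)^N = 2^r * 2^(N-r)" using assms by (simp add: power_add[symmetric])
  finally have "(\<sigma> y - 1) div 2^r < 2^(N-r)" by (simp add: less_mult_imp_div_less mult.commute)
  then show ?thesis using assms G_iff by auto
qed

lemma Wn_at:
  assumes "y \<in> P" "win y r" "1 \<le> r" "r \<le> N"
  shows "\<exists>k. (r,k) \<in> G \<and> Wn r k = y"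
proof -
  let ?k = "(\<sigma> y - 1) div 2^r + 1"
  have g: "(r, ?k) \<in> G" using game_at assms by auto
  then have "Wn r ?k = y" unfolding Wn_def using bw_unique[of r ?k y] assms G_iff by auto
  then show ?thesis using g by blast
qed

lemma Ls_at:
  assumes "y \<in> P" "win y (r-1)" "\<not> win y r" "1 \<le> r" "r \<le> N"
  shows "\<exists>k. (r,k) \<in> G \<and> Ls r k = y"
proof -
  let ?k = "(\<sigma> y - 1) div 2^r + 1"
  have g: "(r, ?k) \<in> G" using game_at assms by auto
  then have "Ls r ?k = y" using Ls_unique[OF g] assms by auto
  then show ?thesis using g by blast
qed

lemma exists_loss:
  assumes "y \<in> P" "win y r0" "\<not> win y N"
  shows "\<exists>r k. (r,k) \<in> G \<and> r0 < r \<and> Ls r k = y"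
proof -
  define r where "r = (LEAST r. \<not> win y r)"
  have nr: "\<not> win y r" unfolding r_def using assms(3) by (rule LeastI)
  have rN: "r \<le> N" unfolding r_def using assms(3) by (rule Least_le)
  have r0r: "r0 < r"
  proof (rule ccontr)
    assume "\<not> r0 < r"
    then have "r \<le> r0" by simp
    then have "win y r" using win_mono assms(2) by blast
    then show False using nr by simp
  qed
  have "r - 1 < r" using r0r by simp
  then have w: "win y (r-1)" unfolding r_def using not_less_Least by blast
  obtain k where "(r,k) \<in> G" "Ls r k = y" using Ls_at[of y r] assms(1) nr w rN r0r by auto
  then show ?thesis using r0r by blast
qed

lemma value_eq:
  assumes sym: "\<And>a b. v a b = v b a"
  shows "tournament_value rk v N P \<sigma> = (\<Sum>g\<in>G. v (Wn (fst g) (snd g)) (Ls (fst g) (snd g)))"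
proof -
  have "tournament_value rk v N P \<sigma> = (\<Sum>r\<in>{1..N}. \<Sum>k\<in>{1..2^(N - r)}.
          v (block_winner rk s (r - 1) (2 * k - 1)) (block_winner rk s (r - 1) (2 * k)))"
    unfolding tournament_value_def s_def Let_def by simp
  also have "\<dots> = (\<Sum>(r,k)\<in>G. v (block_winner rk s (r - 1) (2 * k - 1)) (block_winner rk s (r - 1) (2 * k)))"
    unfolding G_def by (rule sum.Sigma) auto
  also have "\<dots> = (\<Sum>g\<in>G. v (Wn (fst g) (snd g)) (Ls (fst g) (snd g)))"
  proof (rule sum.cong)
    fix g assume "g \<in> G"
    then obtain r k where g: "g = (r,k)" "(r,k) \<in> G" by (cases g) auto
    have "{block_winner rk s (r-1) (2*k-1), block_winner rk s (r-1) (2*k)} = {Wn r k, Ls r k}"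
      using game_facts(9)[OF g(2)] .
    then have "(block_winner rk s (r-1) (2*k-1) = Wn r k \<and> block_winner rk s (r-1) (2*k) = Ls r k) \<or>
       (block_winner rk s (r-1) (2*k-1) = Ls r k \<and> block_winner rk s (r-1) (2*k) = Wn r k)"
      by (simp add: doubleton_eq_iff)
    then show "(case g of (r,k) \<Rightarrow> v (block_winner rk s (r - 1) (2 * k - 1)) (block_winner rk s (r - 1) (2 * k))) =
          v (Wn (fst g) (snd g)) (Ls (fst g) (snd g))"
    proof (elim disjE conjE)
      assume "block_winner rk s (r-1) (2*k-1) = Wn r k" "block_winner rk s (r-1) (2*k) = Ls r k"
      then show ?thesis using g(1) by simp
    next
      assume "block_winner rk s (r-1) (2*k-1) = Ls r k" "block_winner rk s (r-1) (2*k) = Wn r k"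
      then show ?thesis using g(1) sym[of "Ls r k" "Wn r k"] by simp
    qed
  qed simp
  finally show ?thesis .
qed

end

lemma mem_players: "y \<in> players n cs \<longleftrightarrow> (case y of DH i \<Rightarrow> i<n | D i \<Rightarrow> i<n | DT i \<Rightarrow> i<n
   | X i \<Rightarrow> i<n | XT i \<Rightarrow> i<n | XF i \<Rightarrow> i<n | C j \<Rightarrow> j < length cs | F k \<Rightarrow> k < 10*n + tp n - length cs)"
  by (cases y) (auto simp: players_def)

lemma prank_inj: "inj_on (prank n (length cs)) (players n cs)"
proof (rule inj_onI)
  fix x y assume "x \<in> players n cs" "y \<in> players n cs" "prank n (length cs) x = prank n (length cs) y"
  then show "x = y"
    by (cases x; cases y) (auto simp: mem_players; presburger)+
qed

lemma gval_sym: "gval cs a b = gval cs b a"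
  by (cases a; cases b; simp add: gval_def split: option.splits)

lemma gval_vals: "gval cs a b = 0 \<or> gval cs a b = 1 \<or> gval cs a b = -5"
  by (cases a; cases b; simp add: gval_def split: option.splits)

lemma gval_one:
  assumes "gval cs a b = 1" "a \<in> players n cs" "b \<in> players n cs" "prank n (length cs) a < prank n (length cs) b"
  shows "(\<exists>i<n. a = X i \<and> (b = XT i \<or> b = XF i)) \<or>
         (\<exists>i<n. a = XT i \<and> (\<exists>j<length cs. b = C j \<and> pos_in i (cs!j))) \<or>
         (\<exists>i<n. a = XF i \<and> (\<exists>j<length cs. b = C j \<and> neg_in i (cs!j)))"
  using assms by (cases a; cases b; auto simp: gval_def mem_players split: if_splits option.splits)

lemma gval_X:
  assumes "y \<in> players n cs" "i < n" "prank n (length cs) y < prank n (length cs) (X i)" "y \<noteq> D i"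
  shows "gval cs y (X i) = -5"
  using assms by (cases y; auto simp: gval_def mem_players split: if_splits option.splits)

lemma gval_D:
  assumes "z \<in> players n cs" "i < n" "prank n (length cs) (D i) < prank n (length cs) z" "z \<noteq> DT i" "z \<noteq> X i"
  shows "gval cs (D i) z = -5"
  using assms by (cases z; auto simp: gval_def mem_players split: if_splits option.splits)

lemma gval_nondx:
  assumes "\<not> is_dx a" "\<not> is_dx b"
  shows "gval cs a b \<ge> 0"
  using assms by (cases a; cases b; auto simp: gval_def split: if_splits option.splits)

lemma tN_ge: "16 * n \<le> 2 ^ tN n"
  unfolding tN_def
proof (rule LeastI)
  show "16 * n \<le> 2 ^ (16 * n)"
    by (metis Suc_leI le_trans less_exp mult_le_mono1 le_square mult.commute numeral_le_iff semiring_norm(68) power_increasing_iff le_add2 one_less_numeral_iff less_imp_le_nat)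
qed

fun pidx :: "player \<Rightarrow> nat" where
  "pidx (DH i) = i" | "pidx (D i) = i" | "pidx (DT i) = i" | "pidx (X i) = i"
| "pidx (XT i) = i" | "pidx (XF i) = i" | "pidx (C i) = i" | "pidx (F i) = i"

lemma num_sat_le: "num_sat cs a \<le> length cs"
proof -
  have "{j. j < length cs \<and> clause_sat a (cs ! j)} \<subseteq> {..<length cs}" by auto
  then show ?thesis unfolding num_sat_def by (metis card_lessThan card_mono finite_lessThan)
qed

lemma num_sat_le_opt: "num_sat cs a \<le> opt_sat cs"
proof -
  have fin: "finite {num_sat cs a |a. True}"
    by (rule finite_subset[of _ "{..length cs}"]) (auto simp: num_sat_le)
  show ?thesis unfolding opt_sat_def by (rule Max_ge[OF fin]) auto
qed

locale upb = ko "players n cs" N \<sigma> "prank n (length cs)" for n cs N \<sigma> +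
  assumes inst: "max23sat_instance n cs"
begin

abbreviation "PP \<equiv> players n cs"
abbreviation "RK \<equiv> prank n (length cs)"

definition "Wg g = Wn (fst g) (snd g)"
definition "Lg g = Ls (fst g) (snd g)"
definition "vg g = gval cs (Wg g) (Lg g)"
definition "Pos = {g\<in>G. vg g = 1}"
definition "Neg = {g\<in>G. vg g = -5}"
definition "ET i = {g\<in>G. Wg g = X i \<and> Lg g = XT i}"
definition "EF i = {g\<in>G. Wg g = X i \<and> Lg g = XF i}"
definition "BT i = {g\<in>G. Wg g = XT i \<and> (\<exists>j<length cs. Lg g = C j \<and> pos_in i (cs!j))}"
definition "BF i = {g\<in>G. Wg g = XF i \<and> (\<exists>j<length cs. Lg g = C j \<and> neg_in i (cs!j))}"
definition "IA = {i. i < n \<and> (\<exists>g\<in>Neg. Lg g = X i)}"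
definition "IB = {i. i < n \<and> (\<exists>g\<in>Neg. Wg g = D i)}"

lemma Lg_inj: "inj_on Lg G"
proof (rule inj_onI)
  fix g h assume "g \<in> G" "h \<in> G" "Lg g = Lg h"
  then show "g = h" using Ls_inj unfolding Lg_def inj_on_def
    by (metis case_prod_beta)
qed

lemma gf:
  assumes "g \<in> G"
  shows "Wg g \<in> PP" "Lg g \<in> PP" "RK (Wg g) < RK (Lg g)" "win (Wg g) (fst g)"
    "win (Lg g) (fst g - 1)" "\<not> win (Lg g) (fst g)"
    "(\<sigma> (Wg g) - 1) div 2^(fst g) = snd g - 1" "1 \<le> fst g" "fst g \<le> N" "1 \<le> snd g"
proof -
  obtain r k where g: "g = (r,k)" by (cases g)
  then have rk: "(r,k) \<in> G" using assms by simp
  show "Wg g \<in> PP" "Lg g \<in> PP" "RK (Wg g) < RK (Lg g)" "win (Wg g) (fst g)"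
    "win (Lg g) (fst g - 1)" "\<not> win (Lg g) (fst g)" "(\<sigma> (Wg g) - 1) div 2^(fst g) = snd g - 1"
    using game_facts[OF rk] unfolding Wg_def Lg_def g by auto
  show "1 \<le> fst g" "fst g \<le> N" "1 \<le> snd g" using rk G_iff g by auto
qed

lemma value_vg: "tournament_value RK (gval cs) N PP \<sigma> = (\<Sum>g\<in>G. vg g)"
  unfolding vg_def Wg_def Lg_def by (rule value_eq) (rule gval_sym)

lemma sum_vg: "(\<Sum>g\<in>G. vg g) = int (card Pos) - 5 * int (card Neg)"
proof -
  have "(\<Sum>g\<in>G. vg g) = (\<Sum>g\<in>G. (if g \<in> Pos then 1 else 0) + (if g \<in> Neg then -5 else 0))"
  proof (rule sum.cong)
    fix g assume "g \<in> G"
    then show "vg g = (if g \<in> Pos then 1 else 0) + (if g \<in> Neg then -5 else 0)"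
    proof -
      have "vg g = 0 \<or> vg g = 1 \<or> vg g = -5" unfolding vg_def by (rule gval_vals)
      then show ?thesis using \<open>g \<in> G\<close> by (elim disjE) (simp_all add: Pos_def Neg_def)
    qed
  qed simp
  also have "\<dots> = (\<Sum>g\<in>G. (if g \<in> Pos then 1 else 0)) + (\<Sum>g\<in>G. (if g \<in> Neg then -5 else 0))"
    by (rule sum.distrib)
  also have "(\<Sum>g\<in>G. (if g \<in> Pos then 1 else 0)) = (\<Sum>g\<in>G \<inter> Pos. (1::int))"
    using sum.inter_restrict[OF finite_G, of "\<lambda>_. (1::int)" Pos] by simp
  also have "G \<inter> Pos = Pos" unfolding Pos_def by auto
  also have "(\<Sum>g\<in>G. (if g \<in> Neg then -5 else 0)) = (\<Sum>g\<in>G \<inter> Neg. (-5::int))"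
    using sum.inter_restrict[OF finite_G, of "\<lambda>_. (-5::int)" Neg] by simp
  also have "G \<inter> Neg = Neg" unfolding Neg_def by auto
  finally show ?thesis by simp
qed

lemma finPos: "finite Pos" and finNeg: "finite Neg"
  using finite_G unfolding Pos_def Neg_def by auto

lemma fin_sets: "finite (ET i)" "finite (EF i)" "finite (BT i)" "finite (BF i)"
  using finite_G unfolding ET_def EF_def BT_def BF_def by auto

lemma Pos_sub: "Pos \<subseteq> (\<Union>i\<in>{..<n}. ET i \<union> EF i \<union> BT i \<union> BF i)"
proof
  fix g assume "g \<in> Pos"
  then have g: "g \<in> G" "gval cs (Wg g) (Lg g) = 1" unfolding Pos_def vg_def by auto
  from gval_one[OF g(2) gf(1,2,3)[OF g(1)]] show "g \<in> (\<Union>i\<in>{..<n}. ET i \<union> EF i \<union> BT i \<union> BF i)"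
    using g(1) unfolding ET_def EF_def BT_def BF_def by auto
qed

lemma card_ET: "card (ET i) \<le> 1"
proof -
  have "card (ET i) \<le> card {XT i}"
    by (rule card_inj_on_le[of Lg]) (use Lg_inj in \<open>auto simp: ET_def inj_on_def\<close>)
  then show ?thesis by simp
qed

lemma card_EF: "card (EF i) \<le> 1"
proof -
  have "card (EF i) \<le> card {XF i}"
    by (rule card_inj_on_le[of Lg]) (use Lg_inj in \<open>auto simp: EF_def inj_on_def\<close>)
  then show ?thesis by simp
qed

lemma card_B: "i < n \<Longrightarrow> card (BT i) + card (BF i) \<le> 3"
proof -
  assume i: "i < n"
  define J where "J = {j. j < length cs \<and> i \<in> clause_vars (cs!j)}"
  have "card J \<le> 3" using inst i unfolding max23sat_instance_def J_def by auto
  have disj: "BT i \<inter> BF i = {}" unfolding BT_def BF_def by auto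
  have "card (BT i) + card (BF i) = card (BT i \<union> BF i)"
    using card_Un_disjoint[OF fin_sets(3,4) disj] by simp
  also have "\<dots> \<le> card (C ` J)"
  proof (rule card_inj_on_le[of Lg])
    show "inj_on Lg (BT i \<union> BF i)" using Lg_inj by (rule inj_on_subset) (auto simp: BT_def BF_def)
    show "Lg ` (BT i \<union> BF i) \<subseteq> C ` J"
      unfolding BT_def BF_def J_def by (auto simp: pos_in_def neg_in_def clause_vars_def)
    show "finite (C ` J)" unfolding J_def by auto
  qed
  also have "\<dots> \<le> card J" by (rule card_image_le) (auto simp: J_def)
  finally show ?thesis using \<open>card J \<le> 3\<close> by simp
qed

definition "asg i = (card (BF i) \<le> card (BT i))"

lemma max_part: "(\<Sum>i<n. max (card (BT i)) (card (BF i))) \<le> num_sat cs asg"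
proof -
  define M where "M i = (if asg i then BT i else BF i)" for i
  have "(\<Sum>i<n. max (card (BT i)) (card (BF i))) = (\<Sum>i<n. card (M i))"
    by (rule sum.cong) (auto simp: M_def asg_def max_def)
  also have "\<dots> = card (\<Union>i\<in>{..<n}. M i)"
  proof (rule card_UN_disjoint[symmetric])
    show "\<forall>i\<in>{..<n}. finite (M i)" using fin_sets by (auto simp: M_def)
    show "\<forall>i\<in>{..<n}. \<forall>j\<in>{..<n}. i \<noteq> j \<longrightarrow> M i \<inter> M j = {}"
      by (auto simp: M_def BT_def BF_def)
  qed simp
  also have "\<dots> \<le> card (C ` {j. j < length cs \<and> clause_sat asg (cs ! j)})"
  proof (rule card_inj_on_le[of Lg])
    show "inj_on Lg (\<Union>i\<in>{..<n}. M i)" using Lg_inj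
      by (rule inj_on_subset) (auto simp: M_def BT_def BF_def)
    show "Lg ` (\<Union>i\<in>{..<n}. M i) \<subseteq> C ` {j. j < length cs \<and> clause_sat asg (cs ! j)}"
    proof
      fix z assume "z \<in> Lg ` (\<Union>i\<in>{..<n}. M i)"
      then obtain i g where ig: "i < n" "g \<in> M i" "z = Lg g" by auto
      show "z \<in> C ` {j. j < length cs \<and> clause_sat asg (cs ! j)}"
      proof (cases "asg i")
        case True
        then obtain j where "j < length cs" "Lg g = C j" "pos_in i (cs!j)"
          using ig unfolding M_def BT_def by auto
        then show ?thesis using ig True
          by (auto simp: pos_in_def clause_sat_def lit_sat_def)
      next
        case False
        then obtain j where "j < length cs" "Lg g = C j" "neg_in i (cs!j)"
          using ig unfolding M_def BF_def by auto
        then show ?thesis using ig False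
          by (auto simp: neg_in_def clause_sat_def lit_sat_def)
      qed
    qed
    show "finite (C ` {j. j < length cs \<and> clause_sat asg (cs ! j)})" by auto
  qed
  also have "\<dots> \<le> num_sat cs asg" unfolding num_sat_def by (rule card_image_le) auto
  finally show ?thesis .
qed

lemma win2:
  assumes "i < n" "(ET i \<noteq> {} \<and> EF i \<noteq> {}) \<or> (ET i \<noteq> {} \<and> BT i \<noteq> {}) \<or> (EF i \<noteq> {} \<and> BF i \<noteq> {})"
  shows "win (X i) 2"
proof -
  have "\<exists>g\<in>G. Wg g = X i \<and> 2 \<le> fst g"
  proof -
    consider "ET i \<noteq> {} \<and> EF i \<noteq> {}" | "ET i \<noteq> {} \<and> BT i \<noteq> {}" | "EF i \<noteq> {} \<and> BF i \<noteq> {}"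
      using assms by blast
    then show ?thesis
    proof cases
      case 1
      then obtain g1 g2 where g: "g1 \<in> ET i" "g2 \<in> EF i" by blast
      then have G: "g1 \<in> G" "g2 \<in> G" "Wg g1 = X i" "Wg g2 = X i" "Lg g1 = XT i" "Lg g2 = XF i"
        unfolding ET_def EF_def by auto
      have ne: "g1 \<noteq> g2" using G by auto
      have "fst g1 \<noteq> fst g2"
      proof
        assume e: "fst g1 = fst g2"
        have "snd g1 - 1 = snd g2 - 1" using gf(7)[OF G(1)] gf(7)[OF G(2)] G e by simp
        then have "snd g1 = snd g2" using gf(10)[OF G(1)] gf(10)[OF G(2)] by simp
        then show False using e ne by (simp add: prod_eq_iff)
      qed
      then have "2 \<le> fst g1 \<or> 2 \<le> fst g2" using gf(8)[OF G(1)] gf(8)[OF G(2)] by linarith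
      then show ?thesis using G by blast
    next
      case 2
      then obtain g1 g2 where g: "g1 \<in> BT i" "g2 \<in> ET i" by blast
      then have G: "g1 \<in> G" "g2 \<in> G" "Wg g1 = XT i" "Wg g2 = X i" "Lg g2 = XT i"
        unfolding ET_def BT_def by auto
      have "fst g1 < fst g2"
        using W_before_L[of "fst g2" "snd g2" "fst g1" "snd g1"] G unfolding Wg_def Lg_def by simp
      then have "2 \<le> fst g2" using gf(8)[OF G(1)] by linarith
      then show ?thesis using G by blast
    next
      case 3
      then obtain g1 g2 where g: "g1 \<in> BF i" "g2 \<in> EF i" by blast
      then have G: "g1 \<in> G" "g2 \<in> G" "Wg g1 = XF i" "Wg g2 = X i" "Lg g2 = XF i"
        unfolding EF_def BF_def by auto
      have "fst g1 < fst g2"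
        using W_before_L[of "fst g2" "snd g2" "fst g1" "snd g1"] G unfolding Wg_def Lg_def by simp
      then have "2 \<le> fst g2" using gf(8)[OF G(1)] by linarith
      then show ?thesis using G by blast
    qed
  qed
  then obtain g where "g \<in> G" "Wg g = X i" "2 \<le> fst g" by blast
  then show ?thesis using gf(4)[of g] win_mono[of 2 "fst g" "X i"] by simp
qed

lemma charge:
  assumes i: "i < n" and w: "win (X i) 2"
  shows "i \<in> IA \<or> i \<in> IB"
proof -
  have XP: "X i \<in> PP" and DP: "D i \<in> PP" using i by (auto simp: mem_players)
  have "\<not> win (X i) N"
  proof
    assume "win (X i) N"
    moreover have "(\<sigma> (D i) - 1) div 2^N = (\<sigma> (X i) - 1) div 2^N"
      using sigma_in[OF XP] sigma_in[OF DP] by auto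
    ultimately have "RK (X i) \<le> RK (D i)" using DP unfolding win_def by blast
    then show False using i by simp
  qed
  then obtain r k where rk: "(r,k) \<in> G" "2 < r" "Ls r k = X i"
    using exists_loss[OF XP w] by blast
  define Y where "Y = Wn r k"
  have Y: "Y \<in> PP" "RK Y < RK (X i)" "win Y r" using game_facts[OF rk(1)] rk(3) unfolding Y_def by auto
  show ?thesis
  proof (cases "Y = D i")
    case False
    then have "gval cs Y (X i) = -5" using gval_X[OF Y(1) i Y(2)] by simp
    then have "(r,k) \<in> Neg" using rk unfolding Neg_def vg_def Wg_def Lg_def Y_def by simp
    then have "i \<in> IA" unfolding IA_def using i rk(3) unfolding Lg_def by force
    then show ?thesis by simp
  next
    case True
    have rN: "r \<le> N" using rk(1) G_iff by simp
    obtain k1 where k1: "(1,k1) \<in> G" "Wn 1 k1 = D i"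
      using Wn_at[OF DP, of 1] win_mono[of 1 r] Y(3) True rk(2) rN by auto
    obtain k2 where k2: "(2,k2) \<in> G" "Wn 2 k2 = D i"
      using Wn_at[OF DP, of 2] win_mono[of 2 r] Y(3) True rk(2) rN by auto
    have n12: "Ls 1 k1 \<noteq> Ls 2 k2" using inj_onD[OF Ls_inj, of "(1,k1)" "(2,k2)"] k1 k2 by auto
    have n1: "Ls 1 k1 \<noteq> X i" using inj_onD[OF Ls_inj, of "(1,k1)" "(r,k)"] k1 rk by auto
    have n2: "Ls 2 k2 \<noteq> X i" using inj_onD[OF Ls_inj, of "(2,k2)" "(r,k)"] k2 rk by auto
    obtain t kt where t: "(t,kt) \<in> G" "Wn t kt = D i" "Ls t kt \<noteq> DT i" "Ls t kt \<noteq> X i"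
    proof (cases "Ls 1 k1 = DT i")
      case True
      then have "Ls 2 k2 \<noteq> DT i" using n12 by simp
      then show ?thesis using that[of 2 k2] k2 n2 by blast
    next
      case False
      then show ?thesis using that[of 1 k1] k1 n1 by blast
    qed
    have "gval cs (D i) (Ls t kt) = -5"
      using gval_D[of "Ls t kt" n cs i] game_facts[OF t(1)] t i by auto
    then have "(t,kt) \<in> Neg" using t unfolding Neg_def vg_def Wg_def Lg_def by simp
    then have "i \<in> IB" unfolding IB_def using i t(2) unfolding Wg_def by force
    then show ?thesis by simp
  qed
qed

lemma per_i:
  assumes i: "i < n"
  shows "card (BT i) + card (BF i) + card (ET i) + card (EF i) \<le>
     max (card (BT i)) (card (BF i)) + 1 + 2 * (if i \<in> IA then 1 else 0) + 2 * (if i \<in> IB then 1 else 0)"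
proof -
  have b3: "card (BT i) + card (BF i) \<le> 3" using card_B[OF i] .
  have e: "card (ET i) \<le> 1" "card (EF i) \<le> 1" using card_ET card_EF by auto
  show ?thesis
  proof (cases "win (X i) 2")
    case True
    then have "i \<in> IA \<or> i \<in> IB" using charge i by blast
    then show ?thesis using b3 e by (auto simp: max_def)
  next
    case False
    then have c: "\<not> ((ET i \<noteq> {} \<and> EF i \<noteq> {}) \<or> (ET i \<noteq> {} \<and> BT i \<noteq> {}) \<or> (EF i \<noteq> {} \<and> BF i \<noteq> {}))"
      using win2[OF i] by blast
    have z: "card (ET i) = 0 \<longleftrightarrow> ET i = {}" "card (EF i) = 0 \<longleftrightarrow> EF i = {}"
      "card (BT i) = 0 \<longleftrightarrow> BT i = {}" "card (BF i) = 0 \<longleftrightarrow> BF i = {}"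
      using fin_sets by auto
    show ?thesis using c z b3 e by (simp add: max_def) linarith
  qed
qed

lemma card_IA: "card IA \<le> card Neg"
proof -
  have "IA \<subseteq> (\<lambda>g. pidx (Lg g)) ` Neg" unfolding IA_def by force
  then show ?thesis using card_mono[OF finite_imageI[OF finNeg]] card_image_le[OF finNeg] le_trans by blast
qed

lemma card_IB: "card IB \<le> card Neg"
proof -
  have "IB \<subseteq> (\<lambda>g. pidx (Wg g)) ` Neg" unfolding IB_def by force
  then show ?thesis using card_mono[OF finite_imageI[OF finNeg]] card_image_le[OF finNeg] le_trans by blast
qed

lemma sum_ind: "S \<subseteq> {..<n} \<Longrightarrow> (\<Sum>i<n. (if i \<in> S then 1 else 0)) = (card S :: nat)"
proof -
  assume S: "S \<subseteq> {..<n}"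
  have "(\<Sum>i<n. (if i \<in> S then 1 else 0)) = (\<Sum>i\<in>{..<n} \<inter> S. (1::nat))"
    using sum.inter_restrict[OF finite_lessThan, of "\<lambda>_. (1::nat)" n S] by simp
  also have "{..<n} \<inter> S = S" using S by auto
  finally show ?thesis by simp
qed

theorem upper: "tournament_value RK (gval cs) N PP \<sigma> \<le> int (opt_sat cs) + int n"
proof -
  let ?U = "\<lambda>i. ET i \<union> EF i \<union> BT i \<union> BF i"
  have "card Pos \<le> card (\<Union>i\<in>{..<n}. ?U i)"
    using Pos_sub by (rule card_mono[rotated]) (auto simp: fin_sets)
  also have "\<dots> \<le> (\<Sum>i<n. card (?U i))" by (rule card_UN_le) simp
  also have "\<dots> \<le> (\<Sum>i<n. card (BT i) + card (BF i) + card (ET i) + card (EF i))"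
  proof (rule sum_mono)
    fix i
    have "card (?U i) \<le> card (ET i \<union> EF i \<union> BT i) + card (BF i)" by (rule card_Un_le)
    also have "\<dots> \<le> card (ET i \<union> EF i) + card (BT i) + card (BF i)" using card_Un_le by simp
    also have "\<dots> \<le> card (ET i) + card (EF i) + card (BT i) + card (BF i)" using card_Un_le by simp
    finally show "card (?U i) \<le> card (BT i) + card (BF i) + card (ET i) + card (EF i)" by simp
  qed
  also have "\<dots> \<le> (\<Sum>i<n. max (card (BT i)) (card (BF i)) + 1 + 2 * (if i \<in> IA then 1 else 0) + 2 * (if i \<in> IB then 1 else 0))"
    by (rule sum_mono) (use per_i in auto)
  also have "\<dots> = (\<Sum>i<n. max (card (BT i)) (card (BF i))) + n + 2 * (\<Sum>i<n. (if i \<in> IA then 1 else 0)) + 2 * (\<Sum>i<n. (if i \<in> IB then 1 else 0))"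
    by (simp only: sum.distrib) (simp add: sum_distrib_left)
  also have "\<dots> = (\<Sum>i<n. max (card (BT i)) (card (BF i))) + n + 2 * card IA + 2 * card IB"
  proof -
    have "IA \<subseteq> {..<n}" "IB \<subseteq> {..<n}" unfolding IA_def IB_def by auto
    then show ?thesis using sum_ind[of IA] sum_ind[of IB] by presburger
  qed
  finally have cP: "card Pos \<le> num_sat cs asg + n + 2 * card IA + 2 * card IB" using max_part by linarith
  have "tournament_value RK (gval cs) N PP \<sigma> = int (card Pos) - 5 * int (card Neg)"
    using value_vg sum_vg by simp
  also have "\<dots> \<le> int (num_sat cs asg) + int n"
    using cP card_IA card_IB by linarith
  also have "\<dots> \<le> int (opt_sat cs) + int n" using num_sat_le_opt by simp
  finally show ?thesis .
qed

end

lemma extend_bij: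
  assumes "finite U" "finite V" "card U = card V" "inj_on f A" "A \<subseteq> U" "f ` A \<subseteq> V"
  shows "\<exists>g. bij_betw g U V \<and> (\<forall>x\<in>A. g x = f x)"
proof -
  have fA: "finite A" using assms(1,5) finite_subset by blast
  have c: "card (U - A) = card (V - f ` A)"
    using assms fA by (simp add: card_Diff_subset card_image)
  obtain h where h: "bij_betw h (U - A) (V - f ` A)"
    using finite_same_card_bij[OF _ _ c] assms(1,2) by blast
  define g where "g x = (if x \<in> A then f x else h x)" for x
  have b1: "bij_betw g A (f ` A)"
    using assms(4) unfolding g_def by (simp add: bij_betw_def inj_on_def image_def)
  have b2: "bij_betw g (U - A) (V - f ` A)"
    using h by (rule bij_betw_cong[THEN iffD1, rotated]) (simp add: g_def)
  have "bij_betw g (A \<union> (U - A)) (f ` A \<union> (V - f ` A))"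
    by (rule bij_betw_combine[OF b1 b2]) auto
  moreover have "A \<union> (U - A) = U" "f ` A \<union> (V - f ` A) = V" using assms(5,6) by auto
  ultimately show ?thesis unfolding g_def by auto
qed

definition strong :: "player \<Rightarrow> bool" where
  "strong y = (case y of C _ \<Rightarrow> False | F _ \<Rightarrow> False | _ \<Rightarrow> True)"

locale lowc =
  fixes n :: nat and cs :: "clause list" and a :: "nat \<Rightarrow> bool"
  assumes inst: "max23sat_instance n cs"
begin

abbreviation "PL \<equiv> players n cs"
abbreviation "RL \<equiv> prank n (length cs)"
abbreviation "NN \<equiv> tN n"

definition "Sat = {j. j < length cs \<and> clause_sat a (cs!j)}"
definition "cv j = (if lit_sat a (fst (cs!j)) then fst (fst (cs!j)) else fst (snd (cs!j)))"
definition "ct j = card {j'. j' < j \<and> j' \<in> Sat \<and> cv j' = cv j}"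
definition "XA i = (if a i then XT i else XF i)"
definition "XN i = (if a i then XF i else XT i)"
definition "blk y = (case y of DH i \<Rightarrow> i | D i \<Rightarrow> i | DT i \<Rightarrow> i | X i \<Rightarrow> i | XT i \<Rightarrow> i | XF i \<Rightarrow> i
   | C j \<Rightarrow> cv j | F k \<Rightarrow> k div 4)"
definition "off y = (case y of DH i \<Rightarrow> 4 | D i \<Rightarrow> 0 | DT i \<Rightarrow> 1 | X i \<Rightarrow> 2
   | XT i \<Rightarrow> (if a i then 8 else 3) | XF i \<Rightarrow> (if a i then 3 else 8)
   | C j \<Rightarrow> (if ct j = 0 then 9 else if ct j = 1 then 10 else 12)
   | F k \<Rightarrow> (if k mod 4 = 0 then 11 else 12 + k mod 4))"
definition "pos0 y = 16 * blk y + off y"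
definition "B0 = {y \<in> PL. strong y} \<union> F ` {..<4*n} \<union> C ` Sat"

definition "J i = {j. j < length cs \<and> i \<in> clause_vars (cs!j)}"

lemma J3: "i < n \<Longrightarrow> card (J i) \<le> 3"
  using inst unfolding max23sat_instance_def J_def by auto

lemma vars_lt: "j < length cs \<Longrightarrow> clause_vars (cs!j) \<subseteq> {..<n}"
  using inst unfolding max23sat_instance_def by auto

lemma m3: "length cs \<le> 3 * n"
proof -
  have "{..<length cs} \<subseteq> (\<Union>i\<in>{..<n}. J i)"
  proof
    fix j assume j: "j \<in> {..<length cs}"
    then have "fst (fst (cs!j)) \<in> clause_vars (cs!j)" by (simp add: clause_vars_def)
    moreover then have "fst (fst (cs!j)) < n" using vars_lt j by auto
    ultimately show "j \<in> (\<Union>i\<in>{..<n}. J i)" using j unfolding J_def by auto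
  qed
  then have "length cs \<le> card (\<Union>i\<in>{..<n}. J i)"
    by (metis card_lessThan card_mono finite_UN_I finite_lessThan J_def finite_Collect_conjI finite_Collect_less_nat)
  also have "\<dots> \<le> (\<Sum>i<n. card (J i))" by (rule card_UN_le) simp
  also have "\<dots> \<le> (\<Sum>i<n. 3)" by (rule sum_mono) (simp add: J3)
  finally show ?thesis by simp
qed

lemma N16: "16 * n \<le> 2 ^ NN" by (rule tN_ge)

lemma tp_eq: "tp n + 16 * n = 2 ^ NN" using N16 unfolding tp_def by simp

lemma cv_facts: "j < length cs \<Longrightarrow> cv j \<in> clause_vars (cs!j) \<and> cv j < n"
  using vars_lt[of j] unfolding cv_def clause_vars_def by auto

lemma ct_le: assumes "j \<in> Sat" shows "ct j \<le> 2"
proof -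
  have j: "j < length cs" using assms Sat_def by auto
  let ?S = "{j'. j' < j \<and> j' \<in> Sat \<and> cv j' = cv j}"
  have "insert j ?S \<subseteq> J (cv j)"
  proof
    fix x assume "x \<in> insert j ?S"
    then have x: "x < length cs" "cv x = cv j" using j unfolding Sat_def by auto
    then show "x \<in> J (cv j)" using cv_facts[OF x(1)] unfolding J_def by auto
  qed
  have fin: "finite (J (cv j))" by (simp add: J_def)
  have "card (insert j ?S) \<le> card (J (cv j))" by (rule card_mono[OF fin]) fact
  then have "card (insert j ?S) \<le> 3"
    using J3[of "cv j"] cv_facts[OF j] by linarith
  moreover have "card (insert j ?S) = Suc (ct j)" unfolding ct_def by simp
  ultimately show ?thesis by simp
qed

lemma ct_mono: assumes "j1 \<in> Sat" "j2 \<in> Sat" "cv j1 = cv j2" "j1 < j2" shows "ct j1 < ct j2"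
proof -
  let ?S1 = "{j'. j' < j1 \<and> j' \<in> Sat \<and> cv j' = cv j1}"
  let ?S2 = "{j'. j' < j2 \<and> j' \<in> Sat \<and> cv j' = cv j2}"
  have "?S1 \<subset> ?S2" using assms by auto
  then show ?thesis unfolding ct_def by (rule psubset_card_mono[rotated]) simp
qed

lemma ct_inj: assumes "j1 \<in> Sat" "j2 \<in> Sat" "cv j1 = cv j2" "ct j1 = ct j2" shows "j1 = j2"
  using ct_mono[of j1 j2] ct_mono[of j2 j1] assms by (metis less_irrefl nat_neq_iff)

lemma off_lt: "off y < 16"
  by (cases y) (auto simp: off_def)

lemma B0_P: "B0 \<subseteq> PL"
proof -
  have "4 * n \<le> 10 * n + tp n - length cs" using m3 by simp
  then show ?thesis unfolding B0_def Sat_def by (auto simp: mem_players)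
qed

lemma B0_blk: "y \<in> B0 \<Longrightarrow> blk y < n"
  unfolding B0_def Sat_def blk_def strong_def
  by (cases y) (auto simp: mem_players cv_facts)

definition "dec b ofs = (if ofs = (0::nat) then D b else if ofs = 1 then DT b else if ofs = 2 then X b
   else if ofs = 3 then XN b else if ofs = 4 then DH b else XA b)"

lemma off_strong: "strong y \<Longrightarrow> off y \<in> {0,1,2,3,4,8} \<and> y = dec (blk y) (off y)"
  by (cases y) (auto simp: off_def blk_def dec_def XA_def XN_def strong_def)

lemma off_F: "off (F k) \<in> {11,13,14,15} \<and> k = 4 * blk (F k) + (if off (F k) = 11 then 0 else off (F k) - 12)"
proof -
  have "k mod 4 = 0 \<or> k mod 4 = 1 \<or> k mod 4 = 2 \<or> k mod 4 = 3" by presburger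
  then show ?thesis unfolding off_def blk_def by (elim disjE) (simp_all, presburger+)
qed

lemma off_C: "ct j \<le> 2 \<Longrightarrow> off (C j) \<in> {9,10,12} \<and> (off (C j) = 9 \<longleftrightarrow> ct j = 0) \<and> (off (C j) = 10 \<longleftrightarrow> ct j = 1)"
  unfolding off_def by auto

lemma pos0_inj: "inj_on pos0 B0"
proof (rule inj_onI)
  fix y z assume y: "y \<in> B0" and z: "z \<in> B0" and e: "pos0 y = pos0 z"
  have b: "blk y = blk z" and o: "off y = off z"
    using e off_lt[of y] off_lt[of z] unfolding pos0_def by presburger+
  have ctS: "\<And>j. C j \<in> B0 \<Longrightarrow> j \<in> Sat \<and> ct j \<le> 2" unfolding B0_def strong_def using ct_le by auto
  have cls: "\<And>w. w \<in> B0 \<Longrightarrow> (strong w \<and> off w \<in> {0,1,2,3,4,8}) \<or> (\<exists>k. w = F k \<and> off w \<in> {11,13,14,15})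
       \<or> (\<exists>j. w = C j \<and> j \<in> Sat \<and> ct j \<le> 2 \<and> off w \<in> {9,10,12})"
  proof -
    fix w assume w: "w \<in> B0"
    show "?thesis w"
    proof (cases w)
      case (C j) then show ?thesis using ctS[of j] w off_C[of j] by auto
    next
      case (F k) then show ?thesis using off_F[of k] by auto
    qed (use off_strong in \<open>auto simp: strong_def\<close>)
  qed
  show "y = z"
    using cls[OF y]
  proof (elim disjE exE conjE)
    assume sy: "strong y" "off y \<in> {0,1,2,3,4,8}"
    then have "strong z" using cls[OF z] o by auto
    then show ?thesis using off_strong[of y] off_strong[of z] sy b o by metis
  next
    fix k assume yk: "y = F k" "off y \<in> {11,13,14,15}"
    then obtain k' where zk: "z = F k'" using cls[OF z] o by auto
    show ?thesis using off_F[of k] off_F[of k'] yk zk b o by metis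
  next
    fix j assume yj: "y = C j" "j \<in> Sat" "ct j \<le> 2" "off y \<in> {9,10,12}"
    then obtain j' where zj: "z = C j'" "j' \<in> Sat" "ct j' \<le> 2" using cls[OF z] o by auto
    have "cv j = cv j'" using b yj zj by (simp add: blk_def)
    moreover have "ct j = ct j'" using off_C[of j] off_C[of j'] o yj zj by auto
    ultimately show ?thesis using ct_inj yj zj by auto
  qed
qed

lemma card_PP: "card PL = 2 ^ NN"
proof -
  have img: "RL ` PL = {..<2 ^ NN}"
  proof
    show "RL ` PL \<subseteq> {..<2 ^ NN}"
    proof
      fix x assume "x \<in> RL ` PL"
      then obtain y where "y \<in> PL" "x = RL y" by auto
      then show "x \<in> {..<2 ^ NN}" using tp_eq m3 by (cases y) (auto simp: mem_players)
    qed
    show "{..<2 ^ NN} \<subseteq> RL ` PL"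
    proof
      fix x :: nat assume "x \<in> {..<2 ^ NN}"
      then have x: "x < 16 * n + tp n" using tp_eq by simp
      show "x \<in> RL ` PL"
      proof (cases "x < 3 * n")
        case True
        have q: "x div 3 < n" using True by simp
        have "x mod 3 = 0 \<or> x mod 3 = 1 \<or> x mod 3 = 2" by presburger
        then show ?thesis
        proof (elim disjE)
          assume "x mod 3 = 0"
          then have "x = RL (DH (x div 3))" by (simp; presburger)
          then show ?thesis using q by (intro rev_image_eqI[of "DH (x div 3)"]) (auto simp: mem_players)
        next
          assume "x mod 3 = 1"
          then have "x = RL (D (x div 3))" by (simp; presburger)
          then show ?thesis using q by (intro rev_image_eqI[of "D (x div 3)"]) (auto simp: mem_players)
        next
          assume "x mod 3 = 2"
          then have "x = RL (DT (x div 3))" by (simp; presburger)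
          then show ?thesis using q by (intro rev_image_eqI[of "DT (x div 3)"]) (auto simp: mem_players)
        qed
      next
        case False
        note F1 = False
        show ?thesis
        proof (cases "x < 6 * n")
          case True
          define z where "z = x - 3 * n"
          have xz: "x = 3 * n + z" unfolding z_def using F1 by simp
          have q: "z div 3 < n" using True F1 unfolding z_def by simp
          have "z mod 3 = 0 \<or> z mod 3 = 1 \<or> z mod 3 = 2" by presburger
          then show ?thesis
          proof (elim disjE)
            assume "z mod 3 = 0"
            then have "x = RL (X (z div 3))" using xz by (simp; presburger)
            then show ?thesis using q by (intro rev_image_eqI[of "X (z div 3)"]) (auto simp: mem_players)
          next
            assume "z mod 3 = 1"
            then have "x = RL (XT (z div 3))" using xz by (simp; presburger)
            then show ?thesis using q by (intro rev_image_eqI[of "XT (z div 3)"]) (auto simp: mem_players)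
          next
            assume "z mod 3 = 2"
            then have "x = RL (XF (z div 3))" using xz by (simp; presburger)
            then show ?thesis using q by (intro rev_image_eqI[of "XF (z div 3)"]) (auto simp: mem_players)
          qed
        next
          case False
          show ?thesis
          proof (cases "x < 6 * n + length cs")
            case True
            then have "x = RL (C (x - 6 * n))" using False by simp
            then show ?thesis using True False by (intro rev_image_eqI[of "C (x - 6 * n)"]) (auto simp: mem_players)
          next
            case False2: False
            then have "x = RL (F (x - 6 * n - length cs))" using False by simp
            then show ?thesis using False2 x m3
              by (intro rev_image_eqI[of "F (x - 6 * n - length cs)"]) (auto simp: mem_players)
          qed
        qed
      qed
    qed
  qed
  have "card PL = card (RL ` PL)" using prank_inj by (simp add: card_image)
  then show ?thesis using img by simp
qed

lemma finite_PP: "finite PL"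
  using card_PP by (metis card.infinite power_not_zero zero_neq_numeral)

lemma exists_sigma: "\<exists>\<sigma>. bij_betw \<sigma> PL {1..2^NN} \<and> (\<forall>y\<in>B0. \<sigma> y = pos0 y + 1)"
proof -
  have "inj_on (\<lambda>y. pos0 y + 1) B0" using pos0_inj by (simp add: inj_on_def)
  moreover have "(\<lambda>y. pos0 y + 1) ` B0 \<subseteq> {1..2^NN}"
  proof
    fix x assume "x \<in> (\<lambda>y. pos0 y + 1) ` B0"
    then obtain y where y: "y \<in> B0" "x = pos0 y + 1" by auto
    have "pos0 y < 16 * n"
    proof -
      have "blk y + 1 \<le> n" using B0_blk[OF y(1)] by simp
      then have "16 * blk y + 16 \<le> 16 * n" by simp
      then show ?thesis unfolding pos0_def using off_lt[of y] by simp
    qed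
    then show "x \<in> {1..2^NN}" using y N16 by simp
  qed
  ultimately show ?thesis using extend_bij[of PL "{1..2^NN}" "\<lambda>y. pos0 y + 1" B0] finite_PP card_PP B0_P
    by auto
qed

end

lemma pow_ge4: "16 \<le> (2::nat) ^ N \<Longrightarrow> 4 \<le> N"
proof (rule ccontr)
  assume "16 \<le> (2::nat) ^ N" "\<not> 4 \<le> N"
  then have "N \<le> 3" by simp
  then have "(2::nat) ^ N \<le> 2 ^ 3" by (rule power_increasing) simp
  then show False using \<open>16 \<le> 2 ^ N\<close> by simp
qed

locale lows = lowc n cs a + upb n cs "tN n" \<sigma> for n cs a \<sigma> +
  assumes sB0: "\<And>y. y \<in> B0 \<Longrightarrow> \<sigma> y = pos0 y + 1"
begin

lemma strong_B0: "y \<in> PP \<Longrightarrow> strong y \<Longrightarrow> y \<in> B0" unfolding B0_def by auto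

lemma inB0:
  assumes "i < n"
  shows "D i \<in> B0" "DT i \<in> B0" "X i \<in> B0" "XN i \<in> B0" "DH i \<in> B0" "XA i \<in> B0"
    "F (4*i) \<in> B0" "F (4*i+1) \<in> B0" "F (4*i+2) \<in> B0" "F (4*i+3) \<in> B0"
  using assms by (auto simp: B0_def strong_def mem_players XN_def XA_def)

lemma C_B0: "j \<in> Sat \<Longrightarrow> C j \<in> B0" unfolding B0_def by auto

lemma q_B0: "y \<in> B0 \<Longrightarrow> \<sigma> y - 1 = pos0 y" using sB0 by simp

lemma pos0_vals:
  "pos0 (D i) = 16*i" "pos0 (DT i) = 16*i+1" "pos0 (X i) = 16*i+2" "pos0 (XN i) = 16*i+3"
  "pos0 (DH i) = 16*i+4" "pos0 (XA i) = 16*i+8" "pos0 (F (4*i)) = 16*i+11" "pos0 (F (4*i+1)) = 16*i+13"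
  "pos0 (F (4*i+2)) = 16*i+14" "pos0 (F (4*i+3)) = 16*i+15"
proof -
  have d: "(4*i+1) div 4 = i" "(4*i+1) mod 4 = 1" "(4*i+2) div 4 = i" "(4*i+2) mod 4 = 2"
    "(4*i+3) div 4 = i" "(4*i+3) mod 4 = 3" "(4*i) div 4 = i" "(4*i) mod 4 = 0" by presburger+
  show "pos0 (D i) = 16*i" "pos0 (DT i) = 16*i+1" "pos0 (X i) = 16*i+2" "pos0 (XN i) = 16*i+3"
    "pos0 (DH i) = 16*i+4" "pos0 (XA i) = 16*i+8"
    by (auto simp: pos0_def blk_def off_def XN_def XA_def)
  show "pos0 (F (4*i)) = 16*i+11" "pos0 (F (4*i+1)) = 16*i+13"
    "pos0 (F (4*i+2)) = 16*i+14" "pos0 (F (4*i+3)) = 16*i+15"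
    unfolding pos0_def blk_def off_def player.case using d by simp_all
qed

lemma pos0_C: "pos0 (C j) = 16 * cv j + (if ct j = 0 then 9 else if ct j = 1 then 10 else 12)"
  by (simp add: pos0_def blk_def off_def)

lemma who: assumes "y \<in> PP" "z \<in> B0" "\<sigma> y - 1 = pos0 z" shows "y = z"
proof -
  have zP: "z \<in> PP" using B0_P assms(2) by auto
  have "\<sigma> y \<ge> 1" "\<sigma> z \<ge> 1" using sigma_in[OF assms(1)] sigma_in[OF zP] by auto
  moreover have "\<sigma> z - 1 = pos0 z" using q_B0[OF assms(2)] .
  ultimately have "\<sigma> y = \<sigma> z" using assms(3) by linarith
  then show ?thesis using sigma_inj[OF assms(1) zP] by simp
qed

lemma rank_strong: "strong y \<Longrightarrow> 3 * blk y \<le> RK y"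
  by (cases y) (auto simp: strong_def blk_def)

lemma weak_rank: "y \<in> PP \<Longrightarrow> \<not> strong y \<Longrightarrow> 6 * n \<le> RK y"
  by (cases y) (auto simp: strong_def)

lemma rank_blk:
  assumes "y \<in> PP" "(\<sigma> y - 1) div 16 = i" "i < n"
  shows "3 * i \<le> RK y"
proof (cases "strong y")
  case True
  then have "\<sigma> y - 1 = 16 * blk y + off y" using q_B0 strong_B0 assms(1) pos0_def by simp
  then have "blk y = i" using assms(2) off_lt[of y] by simp
  then show ?thesis using rank_strong True by auto
next
  case False then show ?thesis using weak_rank assms by fastforce
qed

lemma hi_half:
  assumes "y \<in> PP" "(\<sigma> y - 1) div 16 = i" "8 \<le> (\<sigma> y - 1) mod 16"
  shows "y = XA i \<or> 6 * n \<le> RK y"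
proof (cases "strong y")
  case True
  then have "\<sigma> y - 1 = 16 * blk y + off y" using q_B0 strong_B0 assms(1) pos0_def by simp
  then have "blk y = i" "off y = (\<sigma> y - 1) mod 16" using assms(2) off_lt[of y] by simp_all
  then have "off y = 8" "blk y = i" using off_strong[OF True] assms(3) by auto
  then have "y = XA i" using off_strong[OF True] by (simp add: dec_def)
  then show ?thesis by simp
next
  case False then show ?thesis using weak_rank assms by fastforce
qed

lemma RK_vals: "RK (D i) = 3*i+1" "RK (DT i) = 3*i+2" "RK (DH i) = 3*i" "RK (X i) = 3*n+3*i"
  "RK (XN i) \<ge> 3*n+3*i+1" "RK (XA i) \<le> 3*n+3*i+2" "RK (XA i) \<ge> 3*n+3*i+1"
  "RK (C j) = 6*n+j" "RK (F k) = 6*n+length cs+k"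
  by (auto simp: XN_def XA_def)

lemma sD: "i < n \<Longrightarrow> \<sigma> (D i) - 1 = 16*i" using q_B0 inB0 pos0_vals by metis
lemma sDT: "i < n \<Longrightarrow> \<sigma> (DT i) - 1 = 16*i+1" using q_B0 inB0 pos0_vals by metis
lemma sX: "i < n \<Longrightarrow> \<sigma> (X i) - 1 = 16*i+2" using q_B0 inB0 pos0_vals by metis
lemma sXN: "i < n \<Longrightarrow> \<sigma> (XN i) - 1 = 16*i+3" using q_B0 inB0 pos0_vals by metis
lemma sDH: "i < n \<Longrightarrow> \<sigma> (DH i) - 1 = 16*i+4" using q_B0 inB0 pos0_vals by metis
lemma sXA: "i < n \<Longrightarrow> \<sigma> (XA i) - 1 = 16*i+8" using q_B0 inB0 pos0_vals by metis

lemma XN_P: "i < n \<Longrightarrow> XN i \<in> PP" and XA_P: "i < n \<Longrightarrow> XA i \<in> PP"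
  by (auto simp: XN_def XA_def mem_players)

lemma range4: "(q::nat) div 4 = 4 * i \<Longrightarrow> q = 16*i \<or> q = 16*i+1 \<or> q = 16*i+2 \<or> q = 16*i+3"
  by presburger

lemma win_D2: assumes "i < n" shows "win (D i) 2"
  unfolding win_def
proof (intro ballI impI)
  fix y assume y: "y \<in> PP" "(\<sigma> y - 1) div 2^2 = (\<sigma> (D i) - 1) div 2^2"
  then have "(\<sigma> y - 1) div 4 = 4 * i" using sD[OF assms] by simp
  then have "\<sigma> y - 1 = 16*i \<or> \<sigma> y - 1 = 16*i+1 \<or> \<sigma> y - 1 = 16*i+2 \<or> \<sigma> y - 1 = 16*i+3"
    by (rule range4)
  then have "\<sigma> y - 1 = pos0 (D i) \<or> \<sigma> y - 1 = pos0 (DT i) \<or> \<sigma> y - 1 = pos0 (X i) \<or> \<sigma> y - 1 = pos0 (XN i)"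
    by (simp only: pos0_vals)
  then have "y = D i \<or> y = DT i \<or> y = X i \<or> y = XN i"
    using who[OF y(1) inB0(1)[OF assms]] who[OF y(1) inB0(2)[OF assms]] who[OF y(1) inB0(3)[OF assms]]
      who[OF y(1) inB0(4)[OF assms]] by blast
  then show "RK (D i) \<le> RK y" using RK_vals(5)[of i] assms by (elim disjE) simp_all
qed

lemma nwin_D3: assumes "i < n" shows "\<not> win (D i) 3"
proof
  assume "win (D i) 3"
  moreover have "DH i \<in> PP" using assms by (simp add: mem_players)
  moreover have "(\<sigma> (DH i) - 1) div 2^3 = (\<sigma> (D i) - 1) div 2^3" using sD[OF assms] sDH[OF assms] by simp
  ultimately have "RK (D i) \<le> RK (DH i)" unfolding win_def by blast
  then show False by simp
qed

lemma win_X1: assumes "i < n" shows "win (X i) 1"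
  unfolding win_def
proof (intro ballI impI)
  fix y assume y: "y \<in> PP" "(\<sigma> y - 1) div 2^1 = (\<sigma> (X i) - 1) div 2^1"
  then have "(\<sigma> y - 1) div 2 = 8 * i + 1" using sX[OF assms] by simp
  then have "\<sigma> y - 1 = 16*i+2 \<or> \<sigma> y - 1 = 16*i+3" by presburger
  then have "\<sigma> y - 1 = pos0 (X i) \<or> \<sigma> y - 1 = pos0 (XN i)" by (simp only: pos0_vals)
  then have "y = X i \<or> y = XN i"
    using who[OF y(1) inB0(3)[OF assms]] who[OF y(1) inB0(4)[OF assms]] by blast
  then show "RK (X i) \<le> RK y" using RK_vals(5)[of i] by (elim disjE) simp_all
qed

lemma nwin_X2: assumes "i < n" shows "\<not> win (X i) 2"
proof
  assume "win (X i) 2"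
  moreover have "D i \<in> PP" using assms by (simp add: mem_players)
  moreover have "(\<sigma> (D i) - 1) div 2^2 = (\<sigma> (X i) - 1) div 2^2" using sD[OF assms] sX[OF assms] by simp
  ultimately have "RK (X i) \<le> RK (D i)" unfolding win_def by blast
  then show False using assms by simp
qed

lemma nwin_XN1: assumes "i < n" shows "\<not> win (XN i) 1"
proof
  assume "win (XN i) 1"
  moreover have "X i \<in> PP" using assms by (simp add: mem_players)
  moreover have "(\<sigma> (X i) - 1) div 2^1 = (\<sigma> (XN i) - 1) div 2^1" using sX[OF assms] sXN[OF assms] by simp
  ultimately have "RK (XN i) \<le> RK (X i)" unfolding win_def by blast
  then show False using RK_vals(5)[of i] by simp
qed

lemma div8a: "(q::nat) div 8 = 2 * i \<Longrightarrow> q div 16 = i"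
  using div_mult2_eq[of q 8 2] by simp
lemma div8b: "(q::nat) div 8 = 2 * i + 1 \<Longrightarrow> q div 16 = i \<and> 8 \<le> q mod 16"
proof -
  assume h: "q div 8 = 2 * i + 1"
  have a: "q div 16 = i" using div_mult2_eq[of q 8 2] h by simp
  have "q div 8 * 8 + q mod 8 = q" by (rule div_mult_mod_eq)
  moreover have "q mod 16 + 16 * (q div 16) = q" by simp
  ultimately show ?thesis using a h by linarith
qed

lemma win_DH3: assumes "i < n" shows "win (DH i) 3"
  unfolding win_def
proof (intro ballI impI)
  fix y assume y: "y \<in> PP" "(\<sigma> y - 1) div 2^3 = (\<sigma> (DH i) - 1) div 2^3"
  then have "(\<sigma> y - 1) div 8 = 2 * i" using sDH[OF assms] by simp
  then have "(\<sigma> y - 1) div 16 = i" by (rule div8a)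
  then show "RK (DH i) \<le> RK y" using rank_blk[OF y(1) _ assms] by simp
qed

lemma win_XA3: assumes "i < n" shows "win (XA i) 3"
  unfolding win_def
proof (intro ballI impI)
  fix y assume y: "y \<in> PP" "(\<sigma> y - 1) div 2^3 = (\<sigma> (XA i) - 1) div 2^3"
  then have "(\<sigma> y - 1) div 8 = 2 * i + 1" using sXA[OF assms] by simp
  then have "(\<sigma> y - 1) div 16 = i" "8 \<le> (\<sigma> y - 1) mod 16" using div8b by blast+
  then have "y = XA i \<or> 6 * n \<le> RK y" using hi_half[OF y(1)] by blast
  moreover have "RK (XA i) < 6 * n" using RK_vals(6)[of i] assms by linarith
  ultimately show "RK (XA i) \<le> RK y" by auto
qed

end

lemma range2: "(q::nat) div 2 = 8 * i + c \<Longrightarrow> q = 16*i + 2*c \<or> q = 16*i+2*c+1"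
  by presburger

lemma range4': "(q::nat) div 4 = 4 * i + c \<Longrightarrow> q = 16*i + 4*c \<or> q = 16*i+4*c+1 \<or> q = 16*i+4*c+2 \<or> q = 16*i+4*c+3"
  by presburger

context lows
begin

lemma NN4: "n \<ge> 1 \<Longrightarrow> 4 \<le> NN"
  using N16 pow_ge4 by (metis le_trans mult_le_mono2 mult.right_neutral)

lemma game_with:
  assumes "y \<in> PP" "w \<in> PP" "win y (r-1)" "\<not> win y r" "win w r"
    "(\<sigma> w - 1) div 2^r = (\<sigma> y - 1) div 2^r" "1 \<le> r" "r \<le> NN"
  shows "\<exists>g\<in>G. Lg g = y \<and> Wg g = w"
proof -
  obtain k where k: "(r,k) \<in> G" "Ls r k = y" using Ls_at[OF assms(1,3,4,7,8)] by blast
  have "(\<sigma> y - 1) div 2^r = k - 1" using game_facts(7)[OF k(1)] k(2) by simp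
  then have "Wn r k = w" unfolding Wn_def using bw_unique[of r k w] k(1) G_iff assms by auto
  then show ?thesis using k by (intro bexI[of _ "(r,k)"]) (auto simp: Lg_def Wg_def)
qed

lemma gval_XN: "gval cs (X i) (XN i) = 1" by (simp add: XN_def gval_def)

lemma sat_lit: assumes "j \<in> Sat" shows "gval cs (XA (cv j)) (C j) = 1"
proof -
  have j: "j < length cs" "clause_sat a (cs!j)" using assms Sat_def by auto
  obtain l1 l2 where c: "cs!j = (l1,l2)" by (cases "cs!j")
  obtain v1 b1 where l1: "l1 = (v1,b1)" by (cases l1)
  obtain v2 b2 where l2: "l2 = (v2,b2)" by (cases l2)
  show ?thesis using j c l1 l2
    by (auto simp: XA_def gval_def cv_def lit_sat_def clause_sat_def pos_in_def neg_in_def)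
qed

lemma XN_games: "i < n \<Longrightarrow> \<exists>g\<in>G. Lg g = XN i \<and> vg g = 1"
proof -
  assume i: "i < n"
  have "\<exists>g\<in>G. Lg g = XN i \<and> Wg g = X i"
  proof (rule game_with)
    show "XN i \<in> PP" "X i \<in> PP" using i by (auto simp: XN_def mem_players)
    show "win (XN i) (1 - 1)" using win0 \<open>XN i \<in> PP\<close> by simp
    show "\<not> win (XN i) 1" using nwin_XN1[OF i] .
    show "win (X i) 1" using win_X1[OF i] .
    show "(\<sigma> (X i) - 1) div 2^1 = (\<sigma> (XN i) - 1) div 2^1" using sX[OF i] sXN[OF i] by simp
    show "1 \<le> (1::nat)" "1 \<le> NN" using NN4 i by auto
  qed
  then show ?thesis using gval_XN unfolding vg_def by auto
qed

lemma C_games: "j \<in> Sat \<Longrightarrow> \<exists>g\<in>G. Lg g = C j \<and> vg g = 1"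
proof -
  assume j: "j \<in> Sat"
  define i where "i = cv j"
  have jl: "j < length cs" using j Sat_def by auto
  have i: "i < n" using cv_facts[OF jl] i_def by simp
  have CP: "C j \<in> PP" using jl by (simp add: mem_players)
  have XAP: "XA i \<in> PP" using XA_P[OF i] .
  have t2: "ct j \<le> 2" using ct_le[OF j] .
  have sC: "\<sigma> (C j) - 1 = 16 * i + (if ct j = 0 then 9 else if ct j = 1 then 10 else 12)"
    using q_B0[OF C_B0[OF j]] pos0_C i_def by simp
  have N4: "4 \<le> NN" using NN4 i by simp
  have rXA: "RK (XA i) < RK (C j)" using RK_vals(6)[of i] i by simp
  have "\<exists>g\<in>G. Lg g = C j \<and> Wg g = XA i"
  proof (cases "ct j = 0")
    case True
    then have s: "\<sigma> (C j) - 1 = 16 * i + 9" using sC by simp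
    show ?thesis
    proof (rule game_with[OF CP XAP, of 1])
      show "win (C j) (1 - 1)" using win0 CP by simp
      show "\<not> win (C j) 1"
      proof
        assume "win (C j) 1"
        moreover have "(\<sigma> (XA i) - 1) div 2^1 = (\<sigma> (C j) - 1) div 2^1" using s sXA[OF i] by simp
        ultimately have "RK (C j) \<le> RK (XA i)" using XAP unfolding win_def by blast
        then show False using rXA by simp
      qed
      show "win (XA i) 1" using win_mono[OF _ win_XA3[OF i], of 1] by simp
      show "(\<sigma> (XA i) - 1) div 2^1 = (\<sigma> (C j) - 1) div 2^1" using s sXA[OF i] by simp
    qed (use N4 in auto)
  next
    case False
    note F0 = False
    show ?thesis
    proof (cases "ct j = 1")
      case True
      then have s: "\<sigma> (C j) - 1 = 16 * i + 10" using sC F0 by simp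
      show ?thesis
      proof (rule game_with[OF CP XAP, of 2])
        show "win (C j) (2 - 1)" unfolding win_def
        proof (intro ballI impI)
          fix y assume y: "y \<in> PP" "(\<sigma> y - 1) div 2 ^ (2 - 1) = (\<sigma> (C j) - 1) div 2 ^ (2 - 1)"
          then have "(\<sigma> y - 1) div 2 = 8 * i + 5" using s by simp
          then have "\<sigma> y - 1 = 16 * i + 10 \<or> \<sigma> y - 1 = 16 * i + 11" using range2[of "\<sigma> y - 1" i 5] by (simp add: ac_simps)
          moreover have "\<sigma> y - 1 = 16 * i + 10 \<Longrightarrow> y = C j"
            using who[OF y(1) C_B0[OF j]] pos0_C[of j] True i_def by simp
          moreover have "\<sigma> y - 1 = 16 * i + 11 \<Longrightarrow> y = F (4*i)"
            using who[OF y(1) inB0(7)[OF i]] pos0_vals(7)[of i] by simp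
          ultimately show "RK (C j) \<le> RK y" using jl by auto
        qed
        show "\<not> win (C j) 2"
        proof
          assume "win (C j) 2"
          moreover have "(\<sigma> (XA i) - 1) div 2^2 = (\<sigma> (C j) - 1) div 2^2" using s sXA[OF i] by simp
          ultimately have "RK (C j) \<le> RK (XA i)" using XAP unfolding win_def by blast
          then show False using rXA by simp
        qed
        show "win (XA i) 2" using win_mono[OF _ win_XA3[OF i], of 2] by simp
        show "(\<sigma> (XA i) - 1) div 2^2 = (\<sigma> (C j) - 1) div 2^2" using s sXA[OF i] by simp
      qed (use N4 in auto)
    next
      case False
      then have s: "\<sigma> (C j) - 1 = 16 * i + 12" using sC F0 by simp
      have ct2: "ct j = 2" using t2 F0 False by simp
      show ?thesis
      proof (rule game_with[OF CP XAP, of 3])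
        show "win (C j) (3 - 1)" unfolding win_def
        proof (intro ballI impI)
          fix y assume y: "y \<in> PP" "(\<sigma> y - 1) div 2 ^ (3 - 1) = (\<sigma> (C j) - 1) div 2 ^ (3 - 1)"
          then have "(\<sigma> y - 1) div 4 = 4 * i + 3" using s by simp
          then have "\<sigma> y - 1 = 16 * i + 12 \<or> \<sigma> y - 1 = 16 * i + 13 \<or> \<sigma> y - 1 = 16 * i + 14 \<or> \<sigma> y - 1 = 16 * i + 15"
            using range4'[of "\<sigma> y - 1" i 3] by (simp add: ac_simps)
          moreover have "\<sigma> y - 1 = 16 * i + 12 \<Longrightarrow> y = C j"
            using who[OF y(1) C_B0[OF j]] pos0_C[of j] ct2 i_def by simp
          moreover have "\<sigma> y - 1 = 16 * i + 13 \<Longrightarrow> y = F (4*i+1)"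
            using who[OF y(1) inB0(8)[OF i]] pos0_vals(8)[of i] by simp
          moreover have "\<sigma> y - 1 = 16 * i + 14 \<Longrightarrow> y = F (4*i+2)"
            using who[OF y(1) inB0(9)[OF i]] pos0_vals(9)[of i] by simp
          moreover have "\<sigma> y - 1 = 16 * i + 15 \<Longrightarrow> y = F (4*i+3)"
            using who[OF y(1) inB0(10)[OF i]] pos0_vals(10)[of i] by simp
          ultimately show "RK (C j) \<le> RK y" using jl by auto
        qed
        show "\<not> win (C j) 3"
        proof
          assume "win (C j) 3"
          moreover have "(\<sigma> (XA i) - 1) div 2^3 = (\<sigma> (C j) - 1) div 2^3" using s sXA[OF i] by simp
          ultimately have "RK (C j) \<le> RK (XA i)" using XAP unfolding win_def by blast
          then show False using rXA by simp
        qed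
        show "win (XA i) 3" using win_XA3[OF i] .
        show "(\<sigma> (XA i) - 1) div 2^3 = (\<sigma> (C j) - 1) div 2^3" using s sXA[OF i] by simp
      qed (use N4 in auto)
    qed
  qed
  then show ?thesis using sat_lit[OF j] unfolding vg_def i_def by auto
qed

end

lemma range2b: "(q::nat) div 2 = 8 * i + 1 \<Longrightarrow> q = 16*i+2 \<or> q = 16*i+3"
  by presburger

context lows
begin

lemma vg_nonneg: assumes g: "g \<in> G" shows "0 \<le> vg g"
proof -
  obtain r k where gk: "g = (r,k)" by (cases g)
  have G: "(r,k) \<in> G" using g gk by simp
  define W where "W = Wn r k"
  define L where "L = Ls r k"
  have WP: "W \<in> PP" and LP: "L \<in> PP" and wW: "win W r" and wL: "win L (r-1)" and nL: "\<not> win L r"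
    and dW: "(\<sigma> W - 1) div 2^r = k - 1" and dL: "(\<sigma> L - 1) div 2^r = k - 1" and rr: "RK W < RK L"
    using game_facts[OF G] unfolding W_def L_def by auto
  have r1: "1 \<le> r" "r \<le> NN" "1 \<le> k" "k \<le> 2^(NN - r)" using G G_iff by auto
  have v: "vg g = gval cs W L" unfolding vg_def Wg_def Lg_def gk W_def L_def by simp
  have WL: "W \<noteq> L" using rr by auto
  show ?thesis
  proof (cases "\<exists>i. W = D i")
    case True
    then obtain i where Wi: "W = D i" by blast
    have i: "i < n" using WP Wi by (simp add: mem_players)
    have r2: "r \<le> 2"
    proof (rule ccontr)
      assume "\<not> r \<le> 2"
      then have "win (D i) 3" using win_mono[of 3 r] wW Wi by simp
      then show False using nwin_D3[OF i] by simp
    qed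
    have "(\<sigma> L - 1) div 2^r = (\<sigma> (D i) - 1) div 2^r" using dL dW Wi by simp
    then have "(\<sigma> L - 1) div 2^2 = (16 * i) div 2^2" using div_pow_mono[OF r2] sD[OF i] by metis
    then have "(\<sigma> L - 1) div 4 = 4 * i" by simp
    then have "\<sigma> L - 1 = 16*i \<or> \<sigma> L - 1 = 16*i+1 \<or> \<sigma> L - 1 = 16*i+2 \<or> \<sigma> L - 1 = 16*i+3"
      by (rule range4)
    then have "\<sigma> L - 1 = pos0 (D i) \<or> \<sigma> L - 1 = pos0 (DT i) \<or> \<sigma> L - 1 = pos0 (X i) \<or> \<sigma> L - 1 = pos0 (XN i)"
      by (simp only: pos0_vals)
    then have "L = D i \<or> L = DT i \<or> L = X i \<or> L = XN i"
      using who[OF LP inB0(1)[OF i]] who[OF LP inB0(2)[OF i]] who[OF LP inB0(3)[OF i]]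
        who[OF LP inB0(4)[OF i]] by blast
    moreover have "L \<noteq> XN i"
    proof
      assume LX: "L = XN i"
      show False
      proof (cases "r = 1")
        case True
        then have "(\<sigma> (XN i) - 1) div 2 = (\<sigma> (D i) - 1) div 2" using dL dW Wi LX by simp
        then show False using sD[OF i] sXN[OF i] by simp
      next
        case False
        then have "r = 2" using r1 r2 by simp
        then show False using wL LX nwin_XN1[OF i] by simp
      qed
    qed
    ultimately have "L = DT i \<or> L = X i" using WL Wi by blast
    then show ?thesis using v Wi by (auto simp: gval_def)
  next
    case noD: False
    show ?thesis
    proof (cases "\<exists>i. W = X i")
      case True
      then obtain i where Wi: "W = X i" by blast
      have i: "i < n" using WP Wi by (simp add: mem_players)
      have r2: "r = 1"
      proof (rule ccontr)
        assume "r \<noteq> 1"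
        then have "win (X i) 2" using win_mono[of 2 r] wW Wi r1 by simp
        then show False using nwin_X2[OF i] by simp
      qed
      have "(\<sigma> L - 1) div 2 = (\<sigma> (X i) - 1) div 2" using dL dW Wi r2 by simp
      then have "(\<sigma> L - 1) div 2 = 8 * i + 1" using sX[OF i] by simp
      then have "\<sigma> L - 1 = 16*i+2 \<or> \<sigma> L - 1 = 16*i+3" by (rule range2b)
      then have "\<sigma> L - 1 = pos0 (X i) \<or> \<sigma> L - 1 = pos0 (XN i)" by (simp only: pos0_vals)
      then have "L = X i \<or> L = XN i"
        using who[OF LP inB0(3)[OF i]] who[OF LP inB0(4)[OF i]] by blast
      then have "L = XN i" using WL Wi by blast
      then show ?thesis using v Wi gval_XN by simp
    next
      case noX: False
      show ?thesis
      proof (cases "\<exists>i. L = D i")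
        case True
        then obtain i where Li: "L = D i" by blast
        have i: "i < n" using LP Li by (simp add: mem_players)
        have r3: "r = 3"
        proof -
          have "r - 1 \<le> 2"
          proof (rule ccontr)
            assume "\<not> r - 1 \<le> 2"
            then have "win (D i) 3" using win_mono[of 3 "r-1"] wL Li by simp
            then show False using nwin_D3[OF i] by simp
          qed
          moreover have "\<not> r \<le> 2"
          proof
            assume "r \<le> 2"
            then have "win (D i) r" using win_mono[OF _ win_D2[OF i]] by simp
            then show False using nL Li by simp
          qed
          ultimately show ?thesis by simp
        qed
        have "Wn r k = DH i"
          unfolding Wn_def
        proof (rule bw_unique)
          show "r \<le> NN" "1 \<le> k" "k \<le> 2^(NN - r)" using r1 by auto
          show "DH i \<in> PP" using i by (simp add: mem_players)
          show "win (DH i) r" using win_DH3[OF i] r3 by simp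
          have "(\<sigma> (D i) - 1) div 2^3 = k - 1" using dL Li r3 by simp
          then show "(\<sigma> (DH i) - 1) div 2^r = k - 1" using sD[OF i] sDH[OF i] r3 by simp
        qed
        then have "W = DH i" unfolding W_def .
        then show ?thesis using v Li by (simp add: gval_def)
      next
        case noLD: False
        show ?thesis
        proof (cases "\<exists>i. L = X i")
          case True
          then obtain i where Li: "L = X i" by blast
          have i: "i < n" using LP Li by (simp add: mem_players)
          have r2: "r = 2"
          proof -
            have "r - 1 \<le> 1"
            proof (rule ccontr)
              assume "\<not> r - 1 \<le> 1"
              then have "win (X i) 2" using win_mono[of 2 "r-1"] wL Li by simp
              then show False using nwin_X2[OF i] by simp
            qed
            moreover have "\<not> r \<le> 1"
            proof
              assume "r \<le> 1"
              then have "win (X i) r" using win_mono[OF _ win_X1[OF i]] by simp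
              then show False using nL Li by simp
            qed
            ultimately show ?thesis by simp
          qed
          have "Wn r k = D i"
            unfolding Wn_def
          proof (rule bw_unique)
            show "r \<le> NN" "1 \<le> k" "k \<le> 2^(NN - r)" using r1 by auto
            show "D i \<in> PP" using i by (simp add: mem_players)
            show "win (D i) r" using win_D2[OF i] r2 by simp
            have "(\<sigma> (X i) - 1) div 2^2 = k - 1" using dL Li r2 by simp
            then show "(\<sigma> (D i) - 1) div 2^r = k - 1" using sD[OF i] sX[OF i] r2 by simp
          qed
          then have "W = D i" unfolding W_def .
          then show ?thesis using v Li by (simp add: gval_def)
        next
          case noLX: False
          have "\<not> is_dx W" using noD noX by (cases W) auto
          moreover have "\<not> is_dx L" using noLD noLX by (cases L) auto
          ultimately show ?thesis using v gval_nondx by simp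
        qed
      qed
    qed
  qed
qed

theorem lower: "int n + int (num_sat cs a) \<le> tournament_value RK (gval cs) NN PP \<sigma>"
proof -
  define Q where "Q = XN ` {..<n} \<union> C ` Sat"
  have XN_inj: "inj XN" unfolding inj_def XN_def by (auto split: if_splits)
  have cQ: "card Q = n + card Sat"
  proof -
    have "card Q = card (XN ` {..<n}) + card (C ` Sat)"
      unfolding Q_def by (rule card_Un_disjoint) (auto simp: Sat_def XN_def)
    moreover have "card (XN ` {..<n}) = n" using XN_inj by (simp add: card_image inj_on_subset)
    moreover have "card (C ` Sat) = card Sat" by (rule card_image) (simp add: inj_on_def)
    ultimately show ?thesis by simp
  qed
  have "Q \<subseteq> Lg ` Pos"
  proof
    fix y assume "y \<in> Q"
    then consider i where "i < n" "y = XN i" | j where "j \<in> Sat" "y = C j" unfolding Q_def by auto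
    then show "y \<in> Lg ` Pos"
    proof cases
      case 1
      then obtain g where "g \<in> G" "Lg g = y" "vg g = 1" using XN_games by blast
      then show ?thesis unfolding Pos_def by force
    next
      case 2
      then obtain g where "g \<in> G" "Lg g = y" "vg g = 1" using C_games by blast
      then show ?thesis unfolding Pos_def by force
    qed
  qed
  then have "card Q \<le> card (Lg ` Pos)" using finPos by (intro card_mono) auto
  also have "\<dots> \<le> card Pos" using finPos by (rule card_image_le)
  finally have cP: "n + card Sat \<le> card Pos" using cQ by simp
  have "(\<Sum>g\<in>Pos. vg g) \<le> (\<Sum>g\<in>G. vg g)"
    by (rule sum_mono2[OF finite_G]) (auto simp: Pos_def vg_nonneg)
  moreover have "(\<Sum>g\<in>Pos. vg g) = int (card Pos)" by (simp add: Pos_def)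
  moreover have "num_sat cs a = card Sat" unfolding num_sat_def Sat_def by simp
  ultimately show ?thesis using cP value_vg by simp
qed

end

context upb
begin
lemma value_lb: "- 5 * int (card G) \<le> tournament_value RK (gval cs) N PP \<sigma>"
proof -
  have "(\<Sum>g\<in>G. (-5::int)) \<le> (\<Sum>g\<in>G. vg g)"
  proof (rule sum_mono)
    fix g show "-5 \<le> vg g" using gval_vals[of cs "Wg g" "Lg g"] unfolding vg_def by auto
  qed
  then show ?thesis using value_vg by simp
qed
end

theorem corollary2:
  fixes n :: nat and cs :: "clause list"
  assumes "max23sat_instance n cs"
  shows "opt_T n cs = int (opt_sat cs) + int n"
proof -
  let ?N = "tN n" and ?P = "players n cs" and ?rk = "prank n (length cs)"
  define V where "V = {tournament_value ?rk (gval cs) ?N ?P \<sigma> | \<sigma>. is_seeding ?P ?N \<sigma>}"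
  have ub: "upb n cs ?N \<sigma>" if "is_seeding ?P ?N \<sigma>" for \<sigma>
    using that assms prank_inj unfolding upb_def upb_axioms_def ko_def is_seeding_def by auto
  define K where "K = card (Sigma {1..?N} (\<lambda>r. {1..(2::nat)^(?N-r)}))"
  have bnd: "v \<in> {-5 * int K .. int (opt_sat cs) + int n}" if vV: "v \<in> V" for v
  proof -
    obtain \<sigma> where s: "is_seeding ?P ?N \<sigma>" "v = tournament_value ?rk (gval cs) ?N ?P \<sigma>"
      using vV unfolding V_def by blast
    have "v \<le> int (opt_sat cs) + int n" using upb.upper[OF ub[OF s(1)]] s by simp
    moreover have "-5 * int K \<le> v" using upb.value_lb[OF ub[OF s(1)]] s
      unfolding K_def ko.G_def[OF upb.axioms(1)[OF ub[OF s(1)]]] by simp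
    ultimately show ?thesis by simp
  qed
  have finV: "finite V" using bnd by (meson finite_atLeastAtMost_int finite_subset subsetI)
  have finS: "finite {num_sat cs a |a. True}"
    by (rule finite_subset[of _ "{..length cs}"]) (auto simp: num_sat_le)
  have "opt_sat cs \<in> {num_sat cs a |a. True}"
    unfolding opt_sat_def by (rule Max_in[OF finS]) auto
  then obtain a where a: "num_sat cs a = opt_sat cs" by auto
  have lc: "lowc n cs" using assms unfolding lowc_def .
  obtain \<sigma> where \<sigma>: "bij_betw \<sigma> ?P {1..2^?N}" "\<forall>y\<in>lowc.B0 n cs a. \<sigma> y = lowc.pos0 cs a y + 1"
    using lowc.exists_sigma[OF lc, of a] by blast
  have seed: "is_seeding ?P ?N \<sigma>" using \<sigma>(1) unfolding is_seeding_def .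
  have ls: "lows n cs a \<sigma>"
    unfolding lows_def lows_axioms_def using lc ub[OF seed] \<sigma>(2) by auto
  have ge: "int n + int (num_sat cs a) \<le> tournament_value ?rk (gval cs) ?N ?P \<sigma>"
    using lows.lower[OF ls] .
  have le: "tournament_value ?rk (gval cs) ?N ?P \<sigma> \<le> int (opt_sat cs) + int n"
    using upb.upper[OF ub[OF seed]] .
  have inV: "int (opt_sat cs) + int n \<in> V"
    unfolding V_def using seed ge le a by (intro CollectI exI[of _ \<sigma>]) auto
  have "Max V = int (opt_sat cs) + int n"
    by (rule Max_eqI[OF finV]) (use bnd inV in auto)
  then show ?thesis unfolding opt_T_def opt_tournament_def V_def .
qed

end
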